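(* Let $q \equiv 5 \pmod 8$ be a prime power such that $q = s^2+4$ for some odd integer $s$. Then the eigenvalues of the adjacency matrix of the cyclotomic tournament $CT_q$ are $$\frac{q-1}{2},\qquad \frac{-1 \pm i\sqrt{q - 2\sqrt{q}}}{2},\qquad \frac{-1 \pm i\sqrt{q+2\sqrt{q}}}{2},$$ where $\frac{q-1}{2}$ has multiplicity $1$ and each of the other four eigenvalues has multiplicity $\frac{q-1}{4}$.
   Context: Cyclotomic tournament: let $q$ be a prime power with $q \equiv 5 \pmod 8$, let $g$ be a generator of $\mathbb{F}_q^*$, let $C_0^{(4)}$ be the subgroup of index $4$ in $\mathbb{F}_q^*$ and $C_i^{(4)} = g^i C_0^{(4)}$. Put $D = C_0^{(4)} \cup C_1^{(4)}$. The cyclotomic tournament $CT_q$ has vertex set $\mathbb{F}_q$ and an arc from $x$ to $y$ if and only if $x - y \in D$. Its adjacency matrix $A$ is the $q\times q$ $0/1$ matrix indexed by $\mathbb{F}_q$ with $A_{xy}=1$ iff there is an arc from $x$ to $y$. *)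

theory Defs
  imports "HOL-Analysis.Analysis" "HOL-Computational_Algebra.Polynomial"
begin

text \<open>Cyclotomic classes of order 4 in a finite field, relative to a generator g
  of the multiplicative group: C_i = g^i * C_0, where C_0 is the subgroup of
  index 4 (the nonzero fourth powers).\<close>
definition cyc_class :: "'a::{field,finite} \<Rightarrow> nat \<Rightarrow> 'a set" where
  "cyc_class g i = {g ^ i * x ^ 4 | x. x \<noteq> 0}"

definition cyc_D :: "'a::{field,finite} \<Rightarrow> 'a set" where
  "cyc_D g = cyc_class g 0 \<union> cyc_class g 1"

definition ct_adj :: "('a::{field,finite}) \<Rightarrow> complex ^('a::{field,finite}) ^('a::{field,finite})" where
  "ct_adj g = (\<chi> x y. if x - y \<in> cyc_D g then 1 else 0)"

definition charpoly :: "complex ^'n ^'n \<Rightarrow> complex poly" where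
  "charpoly A = det (\<chi> i j. (if i = j then [:0, 1:] else 0) - [:A $ i $ j:])"

end

theory Submission
  imports Defs "HOL-Number_Theory.Cong"
begin

lemma ff_pow_card_minus1:
  fixes x :: "'a::{field,finite}"
  assumes "x \<noteq> 0"
  shows "x ^ (CARD('a) - 1) = 1"
proof -
  have "(\<Prod>y\<in>UNIV-{0}. x * y) = x ^ (CARD('a) - 1) * \<Prod>(UNIV-{0::'a})"
    by (simp add: prod.distrib card_Diff_singleton)
  also have "(\<Prod>y\<in>UNIV-{0}. x * y) = (\<Prod>y\<in>UNIV-{0::'a}. y)"
    by (rule prod.reindex_bij_witness[of _ "\<lambda>y. y / x" "\<lambda>y. x * y"]) (use assms in auto)
  finally have "1 * \<Prod>(UNIV-{0::'a}) = x ^ (CARD('a) - 1) * \<Prod>(UNIV-{0::'a})" by simp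
  moreover have "\<Prod>(UNIV-{0::'a}) \<noteq> 0" by (subst prod_zero_iff) auto
  ultimately show ?thesis by (metis mult_cancel_right)
qed

lemma ff_prime_char: "prime CHAR('a::{field,finite})"
  by (simp add: finite_imp_CHAR_pos prime_CHAR_semidom)

definition asub :: "'a::ring_1 set \<Rightarrow> bool" where
  "asub H \<longleftrightarrow> 0 \<in> H \<and> (\<forall>x\<in>H. \<forall>y\<in>H. x + y \<in> H) \<and> (\<forall>x\<in>H. -x \<in> H)"

lemma asub_of_nat: "asub H \<Longrightarrow> x \<in> H \<Longrightarrow> of_nat n * x \<in> H"
  by (induction n) (auto simp: asub_def distrib_right)

lemma asub_diff: "asub H \<Longrightarrow> x \<in> H \<Longrightarrow> y \<in> H \<Longrightarrow> x - y \<in> H"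
  unfolding asub_def by (metis diff_conv_add_uminus)

lemma asub_extend:
  fixes H :: "'a::{field,finite} set"
  assumes H: "asub H" and v: "v \<notin> H"
  defines "H' \<equiv> {h + of_nat c * v | h c. h \<in> H}"
  shows "asub H'" "card H' = card H * CHAR('a)"
proof -
  let ?p = "CHAR('a)"
  have pp: "prime ?p" by (rule ff_prime_char)
  show "asub H'"
    unfolding asub_def H'_def
  proof (intro conjI ballI)
    show "0 \<in> {h + of_nat c * v |h c. h \<in> H}"
      using H by (auto simp: asub_def intro!: exI[of _ 0])
  next
    fix x y assume "x \<in> {h + of_nat c * v |h c. h \<in> H}" "y \<in> {h + of_nat c * v |h c. h \<in> H}"
    then obtain h1 c1 h2 c2 where "x = h1 + of_nat c1 * v" "y = h2 + of_nat c2 * v" "h1 \<in> H" "h2 \<in> H"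
      by auto
    then show "x + y \<in> {h + of_nat c * v |h c. h \<in> H}"
      using H by (auto simp: asub_def algebra_simps intro!: exI[of _ "h1+h2"] exI[of _ "c1+c2"])
  next
    fix x assume "x \<in> {h + of_nat c * v |h c. h \<in> H}"
    then obtain h1 c1 where x: "x = h1 + of_nat c1 * v" "h1 \<in> H" by auto
    have "of_nat (c1 * (?p - 1)) = (- of_nat c1 :: 'a)"
    proof -
      have "of_nat (c1 * (?p - 1)) + of_nat c1 = (of_nat (c1 * ?p) :: 'a)"
        using prime_gt_0_nat[OF pp] by (simp flip: of_nat_add add: algebra_simps)
      also have "\<dots> = 0" by simp
      finally show ?thesis by (simp add: eq_neg_iff_add_eq_0)
    qed
    then show "-x \<in> {h + of_nat c * v |h c. h \<in> H}"
      using H x by (auto simp: asub_def intro!: exI[of _ "-h1"] exI[of _ "c1 * (?p - 1)"])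
  qed
  have img: "H' = (\<lambda>(h, c). h + of_nat c * v) ` (H \<times> {..<?p})"
  proof
    show "H' \<subseteq> (\<lambda>(h, c). h + of_nat c * v) ` (H \<times> {..<?p})"
    proof
      fix x assume "x \<in> H'"
      then obtain h c where x: "x = h + of_nat c * v" "h \<in> H" by (auto simp: H'_def)
      have "(of_nat c :: 'a) = of_nat (c mod ?p)"
        by (simp add: of_nat_eq_iff_cong_CHAR cong_def)
      moreover have "c mod ?p < ?p" using prime_gt_0_nat[OF pp] by simp
      ultimately show "x \<in> (\<lambda>(h, c). h + of_nat c * v) ` (H \<times> {..<?p})"
        using x by (auto intro!: image_eqI[of _ _ "(h, c mod ?p)"])
    qed
  qed (auto simp: H'_def)
  have inj: "inj_on (\<lambda>(h, c). h + of_nat c * v) (H \<times> {..<?p})"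
  proof (rule inj_onI, clarify)
    fix h1 c1 h2 c2 assume h: "h1 \<in> H" "h2 \<in> H" "c1 < ?p" "c2 < ?p"
      and eq: "h1 + of_nat c1 * v = h2 + of_nat c2 * v"
    have "c1 = c2"
    proof (rule ccontr)
      assume ne: "c1 \<noteq> c2"
      {
        fix a b :: nat and ha hb assume ab: "a < b" "b < ?p" "ha \<in> H" "hb \<in> H"
          and e: "ha + of_nat a * v = hb + of_nat b * v"
        have "of_nat (b - a) * v = ha - hb"
          using e ab by (simp add: of_nat_diff algebra_simps)
        hence w: "of_nat (b - a) * v \<in> H" using asub_diff[OF H ab(3,4)] by simp
        have "\<not> ?p dvd (b - a)"
        proof
          assume "?p dvd (b - a)"
          then have "?p \<le> b - a" using ab by (intro dvd_imp_le) auto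
          then show False using ab by linarith
        qed
        then have "coprime ?p (b - a)" by (rule prime_imp_coprime[OF pp])
        then have "coprime (b - a) ?p" by (simp add: coprime_commute)
        then obtain e where "[(b - a) * e = Suc 0] (mod ?p)"
          using cong_solve_coprime_nat by blast
        hence "(of_nat ((b - a) * e) :: 'a) = 1"
          by (metis of_nat_1 One_nat_def of_nat_eq_iff_cong_CHAR)
        moreover have "of_nat e * (of_nat (b - a) * v) = (of_nat ((b - a) * e) :: 'a) * v"
          by (simp only: of_nat_mult mult.assoc mult.commute mult.left_commute)
        ultimately have "v = of_nat e * (of_nat (b - a) * v)" by simp
        hence "v \<in> H" using asub_of_nat[OF H w, of e] by metis
        with v have False by simp
      }
      then show False using ne h eq by (metis linorder_neqE_nat)
    qed
    with eq show "h1 = h2 \<and> c1 = c2" by simp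
  qed
  show "card H' = card H * ?p"
    using img inj by (simp add: card_image card_cartesian_product)
qed

lemma ff_card_prime_power: "\<exists>k. CARD('a::{field,finite}) = CHAR('a) ^ k"
proof -
  let ?p = "CHAR('a)"
  have "\<exists>H::'a set. \<exists>j. asub H \<and> card H = ?p ^ j \<and> (n \<le> card H \<or> H = UNIV)" for n
  proof (induction n)
    case 0
    show ?case by (intro exI[of _ "{0}"] exI[of _ 0]) (auto simp: asub_def)
  next
    case (Suc n)
    then obtain H :: "'a set" and j where H: "asub H" "card H = ?p ^ j" "n \<le> card H \<or> H = UNIV" by blast
    show ?case
    proof (cases "H = UNIV")
      case True then show ?thesis using H by blast
    next
      case False
      then obtain v where v: "v \<notin> H" by blast
      define H' where "H' = {h + of_nat c * v | h c. h \<in> H}"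
      have "asub H'" "card H' = card H * ?p" using asub_extend[OF H(1) v] by (simp_all add: H'_def)
      moreover have "card H > 0" using H(1) by (auto simp: asub_def card_gt_0_iff)
      moreover have "?p \<ge> 2" using ff_prime_char[where 'a='a] prime_ge_2_nat by blast
      ultimately have "card H' = ?p ^ Suc j" "card H < card H'" using H by auto
      moreover have "Suc n \<le> card H'" using H(3) False \<open>card H < card H'\<close> by auto
      ultimately show ?thesis using \<open>asub H'\<close> by blast
    qed
  qed
  then obtain H :: "'a set" and j where H: "card H = ?p ^ j" "Suc CARD('a) \<le> card H \<or> H = UNIV" by blast
  have "card H \<le> CARD('a)" by (simp add: card_mono)
  then have "H = UNIV" using H by auto
  then show ?thesis using H by auto
qed

lemma ff_CHAR_dvd_CARD: "CHAR('a::{field,finite}) dvd CARD('a)"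
proof -
  obtain k where k: "CARD('a) = CHAR('a) ^ k" using ff_card_prime_power by blast
  have "card {0, 1::'a} \<le> CARD('a)" by (rule card_mono) auto
  then have "CARD('a) \<ge> 2" by simp
  then have "k \<noteq> 0" using k by (cases k) auto
  then show ?thesis using k by (simp add: dvd_power)
qed


locale cyc =
  fixes g :: "'a::{field,finite}"
  assumes gen: "\<forall>x::'a. x \<noteq> 0 \<longrightarrow> (\<exists>k::nat. x = g ^ k)"
    and q5: "CARD('a) mod 8 = 5"
begin

definition f :: nat where "f = (CARD('a) - 1) div 4"
definition iota :: 'a where "iota = g ^ f"

lemma q_eq: "CARD('a) = 4 * f + 1"
  using q5 unfolding f_def by presburger

lemma f_odd: "odd f"
  using q5 unfolding f_def by presburger

lemma f_pos: "f > 0" using f_odd by (cases f) auto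

lemma q_ge5: "CARD('a) \<ge> 5" using q_eq f_pos by simp

lemma g_ne0: "g \<noteq> 0"
proof
  assume g0: "g = 0"
  have "UNIV \<subseteq> {0, 1::'a}"
  proof
    fix x :: 'a
    show "x \<in> {0,1}"
    proof (cases "x = 0")
      case False
      then obtain k where "x = g ^ k" using gen by blast
      then show ?thesis using g0 by (cases k) auto
    qed auto
  qed
  then have "CARD('a) \<le> card {0,1::'a}" by (intro card_mono) auto
  then have "CARD('a) \<le> 2" by simp
  then show False using q_ge5 by simp
qed

lemma card_nonzero: "card (UNIV - {0::'a}) = CARD('a) - 1"
  by (simp add: card_Diff_singleton)

lemma g_pow_q1: "g ^ (CARD('a) - 1) = 1"
  using ff_pow_card_minus1 g_ne0 by blast

lemma g_pow_ne1:
  assumes "0 < m" "m < CARD('a) - 1"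
  shows "g ^ m \<noteq> 1"
proof
  assume gm: "g ^ m = 1"
  have "UNIV - {0::'a} \<subseteq> (\<lambda>k. g ^ k) ` {..<m}"
  proof
    fix x :: 'a assume "x \<in> UNIV - {0}"
    then obtain k where k: "x = g ^ k" using gen by blast
    have "g ^ k = g ^ (m * (k div m)) * g ^ (k mod m)" by (simp flip: power_add)
    also have "g ^ (m * (k div m)) = 1" by (simp add: power_mult gm)
    finally show "x \<in> (\<lambda>k. g ^ k) ` {..<m}" using k assms(1) by auto
  qed
  then have "CARD('a) - 1 \<le> m"
    by (metis card_nonzero card_image_le card_lessThan finite_lessThan le_trans card_mono finite_imageI)
  then show False using assms by simp
qed

lemma iota_sq: "iota ^ 2 = -1"
proof -
  have "(iota ^ 2) ^ 2 = 1" unfolding iota_def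
    by (metis g_pow_q1 power_mult q_eq add_diff_cancel_right' mult.commute numeral_Bit0 numeral_One mult_2 One_nat_def)
  moreover have "iota ^ 2 \<noteq> 1" unfolding iota_def
    using g_pow_ne1[of "f * 2"] f_pos q_eq by (simp add: power_mult)
  ultimately show ?thesis
    by (metis (no_types, lifting) power2_eq_1_iff)
qed

lemma CHAR_odd: "odd CHAR('a)"
proof -
  have "CHAR('a) dvd CARD('a)" by (rule ff_CHAR_dvd_CARD)
  moreover have "odd CARD('a)" using q_eq by simp
  ultimately show ?thesis using dvd_trans by blast
qed

lemma two_ne0: "(2::'a) \<noteq> 0"
proof
  assume "(2::'a) = 0"
  then have "of_nat 2 = (0::'a)" by simp
  then have "CHAR('a) dvd 2" by (simp only: of_nat_eq_0_iff_char_dvd)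
  moreover have "CHAR('a) \<ge> 2" using ff_prime_char[where 'a='a] prime_ge_2_nat by blast
  moreover have "CHAR('a) \<le> 2" using \<open>CHAR('a) dvd 2\<close> by (rule dvd_imp_le) simp
  ultimately have "CHAR('a) = 2" by linarith
  then show False using CHAR_odd by simp
qed

lemma one_ne_m1: "(1::'a) \<noteq> -1"
  using two_ne0 by (metis one_add_one eq_neg_iff_add_eq_0)

lemma iota_ne1: "iota \<noteq> 1" using iota_sq one_ne_m1 by auto
lemma iota_nem1: "iota \<noteq> -1" using iota_sq one_ne_m1 by (auto simp: power2_eq_square)
lemma iota_ne0: "iota \<noteq> 0" using iota_sq one_ne_m1 by auto
lemma iota_ne_neg: "iota \<noteq> -iota"
proof
  assume "iota = -iota"
  then have "iota + iota = 0" by (metis add.right_inverse)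
  then have "2 * iota = 0" by (simp only: mult_2)
  then show False using two_ne0 iota_ne0 by simp
qed
lemma iota_ne: "iota \<noteq> 1" "iota \<noteq> -1" "iota \<noteq> 0" "-iota \<noteq> 1" "-iota \<noteq> -1" "iota \<noteq> -iota"
  using iota_ne1 iota_nem1 iota_ne0 iota_ne_neg by (auto simp: minus_equation_iff[of iota])

definition M4 :: "'a set" where "M4 = {1, iota, -1, -iota}"

lemma iota_pow_M4: "iota ^ k \<in> M4"
proof (induction k)
  case (Suc k)
  then show ?case using iota_sq by (auto simp: M4_def power2_eq_square)
qed (simp add: M4_def)

lemma pow_f_M4: "x \<noteq> 0 \<Longrightarrow> x ^ f \<in> M4"
proof -
  assume "x \<noteq> 0"
  then obtain k where "x = g ^ k" using gen by blast
  then have "x ^ f = iota ^ k" unfolding iota_def by (simp add: power_mult[symmetric] mult.commute)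
  then show ?thesis using iota_pow_M4 by simp
qed

lemma zero_notin_M4: "0 \<notin> M4"
  using iota_ne by (auto simp: M4_def)

definition w :: "'a \<Rightarrow> complex" where
  "w u = (if u = 1 then 1 else if u = iota then \<i> else if u = -1 then -1 else if u = -iota then -\<i> else 0)"

lemma w_vals: "w 1 = 1" "w iota = \<i>" "w (-1) = -1" "w (-iota) = -\<i>" "w 0 = 0"
  using iota_ne one_ne_m1 by (auto simp: w_def)

lemma w_mult: "u \<in> M4 \<Longrightarrow> v \<in> M4 \<Longrightarrow> w (u * v) = w u * w v"
  using iota_sq by (auto simp: M4_def w_vals power2_eq_square)

definition chi :: "'a \<Rightarrow> complex" where "chi x = w (x ^ f)"

lemma chi_0[simp]: "chi 0 = 0"
  using f_pos by (simp add: chi_def w_vals power_0_left)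

lemma chi_mult: "chi (x * y) = chi x * chi y"
proof (cases "x = 0 \<or> y = 0")
  case True then show ?thesis by auto
next
  case False
  then show ?thesis unfolding chi_def using pow_f_M4 w_mult by (simp add: power_mult_distrib)
qed

lemma chi_vals: "x \<noteq> 0 \<Longrightarrow> chi x \<in> {1, \<i>, -1, -\<i>}"
  using pow_f_M4[of x] by (auto simp: chi_def M4_def w_vals)

lemma chi_g: "chi g = \<i>"
  by (simp add: chi_def iota_def[symmetric] w_vals)

lemma chi_m1: "chi (-1) = -1"
  using f_odd by (simp add: chi_def w_vals)

lemma chi_1: "chi 1 = 1" by (simp add: chi_def w_vals)

lemma chi_pow: "chi (x ^ n) = chi x ^ n"
proof (induction n)
  case (Suc n)
  have "chi (x ^ Suc n) = chi (x * x ^ n)" by simp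
  also have "\<dots> = chi x * chi (x ^ n)" by (rule chi_mult)
  finally show ?case using Suc by simp
qed (simp add: chi_1)

lemma chi_ne0: "x \<noteq> 0 \<Longrightarrow> chi x \<noteq> 0"
  by (drule chi_vals) auto

lemma chi_cnj_mult: "x \<noteq> 0 \<Longrightarrow> cnj (chi x) * chi x = 1"
  using chi_vals[of x] by auto

lemma chi_pow4: "x \<noteq> 0 \<Longrightarrow> chi x ^ 4 = 1"
  using chi_vals[of x] by (auto simp: power4_eq_xxxx)

lemma chi_inverse: "chi (inverse x) = cnj (chi x)"
proof (cases "x = 0")
  case False
  have "chi (inverse x) * chi x = chi (inverse x * x)" by (simp only: chi_mult)
  also have "\<dots> = 1" using False by (simp add: chi_1)
  finally have "chi (inverse x) * chi x = 1" .
  then show ?thesis using chi_cnj_mult[OF False] chi_ne0[OF False]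
    by (metis mult_cancel_right)
qed simp

end


lemma sum_UNIV_shift:
  fixes h :: "'a::{ab_group_add,finite} \<Rightarrow> 'b::comm_monoid_add"
  shows "(\<Sum>x\<in>UNIV. h (x + c)) = (\<Sum>x\<in>UNIV. h x)"
proof -
  have "bij_betw (\<lambda>x. x + c) UNIV UNIV"
    by (rule bij_betwI[of _ _ _ "\<lambda>x. x - c"]) auto
  then show ?thesis by (rule sum.reindex_bij_betw)
qed

lemma sum_UNIV_neg:
  fixes h :: "'a::{ab_group_add,finite} \<Rightarrow> 'b::comm_monoid_add"
  shows "(\<Sum>x\<in>UNIV. h (- x)) = (\<Sum>x\<in>UNIV. h x)"
proof -
  have "bij_betw (\<lambda>x::'a. - x) UNIV UNIV"
    by (rule bij_betwI[of _ _ _ "\<lambda>x::'a. - x"]) auto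
  then show ?thesis by (rule sum.reindex_bij_betw)
qed

lemma sum_UNIV_mult:
  fixes h :: "'a::{field,finite} \<Rightarrow> 'b::comm_monoid_add"
  assumes "c \<noteq> 0"
  shows "(\<Sum>x\<in>UNIV. h (c * x)) = (\<Sum>x\<in>UNIV. h x)"
proof -
  have "bij_betw (\<lambda>x. c * x) UNIV UNIV"
    by (rule bij_betwI[of _ _ _ "\<lambda>x. x / c"]) (use assms in auto)
  then show ?thesis by (rule sum.reindex_bij_betw)
qed

lemma gauss_norm_generic:
  fixes c psi :: "'a::{field,finite} \<Rightarrow> complex"
  assumes cm: "\<And>x y. c (x * y) = c x * c y" and c0: "c 0 = 0"
    and cn: "\<And>x. x \<noteq> 0 \<Longrightarrow> cnj (c x) * c x = 1"
    and cs: "(\<Sum>x\<in>UNIV. c x) = 0"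
    and pa: "\<And>x y. psi (x + y) = psi x * psi y"
    and pn: "\<And>x. cnj (psi x) * psi x = 1"
    and ps: "\<And>b. (\<Sum>x\<in>UNIV-{0}. psi (b * x)) = (if b = 0 then of_nat CARD('a) - 1 else -1)"
  shows "cnj (\<Sum>x\<in>UNIV. c x * psi x) * (\<Sum>x\<in>UNIV. c x * psi x) = of_nat CARD('a)"
proof -
  have psi0: "psi 0 = 1"
  proof -
    have "psi 0 = psi 0 * psi 0" using pa[of 0 0] by simp
    moreover have "psi 0 \<noteq> 0" using pn[of 0] by auto
    ultimately show ?thesis by (metis mult_cancel_right2)
  qed
  have pneg: "psi (-x) = cnj (psi x)" for x
  proof -
    have "psi (-x) * psi x = 1" using pa[of "-x" x] psi0 by simp
    moreover have "psi x \<noteq> 0" using pn[of x] by auto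
    ultimately show ?thesis using pn[of x] by (metis mult_cancel_right)
  qed
  have c1: "c 1 = 1"
  proof -
    have "c 1 = c 1 * c 1" using cm[of 1 1] by simp
    moreover have "c 1 \<noteq> 0" using cn[of 1] by auto
    ultimately show ?thesis by (metis mult_cancel_right2)
  qed
  have "cnj (\<Sum>x\<in>UNIV. c x * psi x) * (\<Sum>x\<in>UNIV. c x * psi x) = (\<Sum>y\<in>UNIV. \<Sum>x\<in>UNIV. cnj (c y) * c x * psi (x - y))"
  proof -
    have "cnj (\<Sum>x\<in>UNIV. c x * psi x) * (\<Sum>x\<in>UNIV. c x * psi x) =
      (\<Sum>y\<in>UNIV. \<Sum>x\<in>UNIV. cnj (c y * psi y) * (c x * psi x))"
      by (simp only: cnj_sum sum_product)
    also have "\<dots> = (\<Sum>y\<in>UNIV. \<Sum>x\<in>UNIV. cnj (c y) * c x * psi (x - y))"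
    proof (intro sum.cong refl)
      fix x y
      have "psi (x - y) = psi x * cnj (psi y)" by (simp only: diff_conv_add_uminus pa pneg)
      then show "cnj (c y * psi y) * (c x * psi x) = cnj (c y) * c x * psi (x - y)" by simp
    qed
    finally show ?thesis .
  qed
  also have "\<dots> = (\<Sum>y\<in>UNIV-{0}. \<Sum>t\<in>UNIV. c t * psi ((t - 1) * y))"
  proof -
    have "(\<Sum>y\<in>UNIV. \<Sum>x\<in>UNIV. cnj (c y) * c x * psi (x - y)) = (\<Sum>y\<in>UNIV-{0}. \<Sum>x\<in>UNIV. cnj (c y) * c x * psi (x - y))"
      by (rule sum.mono_neutral_right) (auto simp: c0)
    also have "\<dots> = (\<Sum>y\<in>UNIV-{0}. \<Sum>t\<in>UNIV. c t * psi ((t - 1) * y))"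
    proof (rule sum.cong[OF refl])
      fix y :: 'a assume "y \<in> UNIV - {0}"
      then have y: "y \<noteq> 0" by simp
      have "(\<Sum>x\<in>UNIV. cnj (c y) * c x * psi (x - y)) = (\<Sum>t\<in>UNIV. cnj (c y) * c (t * y) * psi (t * y - y))"
        by (rule sum.reindex_bij_witness[of _ "\<lambda>x. x * y" "\<lambda>x. x / y"]) (use y in auto)
      also have "\<dots> = (\<Sum>t\<in>UNIV. c t * psi ((t - 1) * y))"
        using cn[OF y] by (intro sum.cong) (auto simp: cm algebra_simps)
      finally show "(\<Sum>x\<in>UNIV. cnj (c y) * c x * psi (x - y)) = (\<Sum>t\<in>UNIV. c t * psi ((t - 1) * y))" .
    qed
    finally show ?thesis .
  qed
  also have "\<dots> = (\<Sum>t\<in>UNIV. c t * (\<Sum>y\<in>UNIV-{0}. psi ((t - 1) * y)))"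
    by (subst sum.swap) (simp add: sum_distrib_left)
  also have "\<dots> = (\<Sum>t\<in>UNIV. c t * (if t = 1 then of_nat CARD('a) else 0) - c t)"
  proof (intro sum.cong refl)
    fix t :: 'a
    have "(\<Sum>y\<in>UNIV-{0}. psi ((t - 1) * y)) = (if t = 1 then of_nat CARD('a) - 1 else -1)"
      using ps[of "t - 1"] by simp
    then show "c t * (\<Sum>y\<in>UNIV-{0}. psi ((t - 1) * y)) = c t * (if t = 1 then of_nat CARD('a) else 0) - c t"
      by (simp add: algebra_simps)
  qed
  also have "\<dots> = (\<Sum>t\<in>UNIV. (if t = 1 then c t * of_nat CARD('a) else 0)) - (\<Sum>t\<in>UNIV. c t)"
    by (simp add: sum_subtractf if_distrib[of "\<lambda>z. c _ * z"] cong: if_cong)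
  also have "\<dots> = of_nat CARD('a)"
    by (simp add: cs c1)
  finally show ?thesis .
qed

locale cycpsi = cyc g for g :: "'a::{field,finite}" +
  fixes psi :: "'a \<Rightarrow> complex"
  assumes psi_add: "psi (x + y) = psi x * psi y"
    and psi_norm: "cnj (psi x) * psi x = 1"
    and psi_nontriv: "\<exists>c. psi c \<noteq> 1"
begin

lemma psi_ne0: "psi x \<noteq> 0" using psi_norm[of x] by auto

lemma psi_0: "psi 0 = 1"
proof -
  have "psi 0 = psi 0 * psi 0" using psi_add[of 0 0] by simp
  then show ?thesis using psi_ne0[of 0] by (metis mult_cancel_right2)
qed

lemma psi_neg: "psi (-x) = cnj (psi x)"
proof -
  have "psi (-x) * psi x = 1" using psi_add[of "-x" x] psi_0 by simp
  then show ?thesis using psi_norm[of x] psi_ne0[of x] by (metis mult_cancel_right)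
qed

lemma sum_psi: "(\<Sum>x\<in>UNIV. psi x) = 0"
proof -
  obtain c where c: "psi c \<noteq> 1" using psi_nontriv by blast
  have "(\<Sum>x\<in>UNIV. psi x) = (\<Sum>x\<in>UNIV. psi (x + c))"
    by (rule sum_UNIV_shift[symmetric])
  also have "\<dots> = psi c * (\<Sum>x\<in>UNIV. psi x)" by (simp add: psi_add sum_distrib_left mult_ac)
  finally have "(1 - psi c) * (\<Sum>x\<in>UNIV. psi x) = 0" by (simp add: algebra_simps)
  then show ?thesis using c by simp
qed

lemma sum_psi_mult: "(\<Sum>x\<in>UNIV. psi (b * x)) = (if b = 0 then of_nat CARD('a) else 0)"
proof (cases "b = 0")
  case False
  have "(\<Sum>x\<in>UNIV. psi (b * x)) = (\<Sum>x\<in>UNIV. psi x)"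
    by (rule sum_UNIV_mult[OF False])
  then show ?thesis using False sum_psi by simp
qed (simp add: psi_0)

lemma sum_psi_mult_nz: "(\<Sum>x\<in>UNIV-{0}. psi (b * x)) = (if b = 0 then of_nat CARD('a) - 1 else -1)"
proof -
  have "(\<Sum>x\<in>UNIV. psi (b * x)) = psi (b * 0) + (\<Sum>x\<in>UNIV-{0}. psi (b * x))"
    by (subst sum.remove[of _ 0]) auto
  then have "(\<Sum>x\<in>UNIV-{0}. psi (b * x)) = (\<Sum>x\<in>UNIV. psi (b * x)) - 1"
    using psi_0 by simp
  then show ?thesis using sum_psi_mult[of b] by simp
qed

end

context cyc
begin

lemma sum_chi_pow: assumes "\<i> ^ m \<noteq> 1" shows "(\<Sum>x\<in>UNIV. chi x ^ m) = 0"
proof -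
  have "(\<Sum>x\<in>UNIV. chi x ^ m) = (\<Sum>x\<in>UNIV. chi (g * x) ^ m)"
    by (rule sum_UNIV_mult[OF g_ne0, symmetric])
  also have "\<dots> = \<i> ^ m * (\<Sum>x\<in>UNIV. chi x ^ m)"
    by (simp add: chi_mult chi_g power_mult_distrib sum_distrib_left)
  finally have "(1 - \<i> ^ m) * (\<Sum>x\<in>UNIV. chi x ^ m) = 0" by (simp add: algebra_simps)
  then show ?thesis using assms by simp
qed

lemma sum_chi: "(\<Sum>x\<in>UNIV. chi x) = 0" using sum_chi_pow[of 1] by simp
lemma sum_chi2: "(\<Sum>x\<in>UNIV. chi x ^ 2) = 0" using sum_chi_pow[of 2] by simp

lemma card_chi_shift:
  "card {x. chi x = \<i> * c} = card {x. chi x = c}"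
proof -
  have "card {x. chi x = c} = card ((\<lambda>x. g * x) ` {x. chi x = c})"
    by (rule card_image[symmetric]) (use g_ne0 in \<open>auto simp: inj_on_def\<close>)
  also have "(\<lambda>x. g * x) ` {x. chi x = c} = {x. chi x = \<i> * c}"
  proof
    show "(\<lambda>x. g * x) ` {x. chi x = c} \<subseteq> {x. chi x = \<i> * c}"
      by (auto simp: chi_mult chi_g)
    show "{x. chi x = \<i> * c} \<subseteq> (\<lambda>x. g * x) ` {x. chi x = c}"
    proof
      fix x assume "x \<in> {x. chi x = \<i> * c}"
      then have "chi x = \<i> * c" by simp
      moreover have "g * (x / g) = x" using g_ne0 by simp
      ultimately have "chi g * chi (x / g) = \<i> * c" by (metis chi_mult)
      then have "chi (x / g) = c" by (simp add: chi_g)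
      then show "x \<in> (\<lambda>x. g * x) ` {x. chi x = c}" using g_ne0 by (intro image_eqI[of _ _ "x / g"]) auto
    qed
  qed
  finally show ?thesis by simp
qed

lemma card_chi_class: assumes "c \<in> {1, \<i>, -1, -\<i>}" shows "card {x. chi x = c} = f"
proof -
  have e: "card {x. chi x = \<i>} = card {x. chi x = 1}" "card {x. chi x = -1} = card {x. chi x = 1}"
    "card {x. chi x = -\<i>} = card {x. chi x = 1}"
    using card_chi_shift[of 1] card_chi_shift[of "\<i>"] card_chi_shift[of "-1"] by simp_all
  have "UNIV - {0} = {x. chi x = 1} \<union> {x. chi x = \<i>} \<union> {x. chi x = -1} \<union> {x. chi x = -\<i>}"
    using chi_vals by (auto simp: complex_eq_iff)
  then have "CARD('a) - 1 = card ({x. chi x = 1} \<union> {x. chi x = \<i>} \<union> {x. chi x = -1} \<union> {x. chi x = -\<i>})"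
    by (metis card_nonzero)
  also have "\<dots> = card {x. chi x = 1} + card {x. chi x = \<i>} + card {x. chi x = -1} + card {x. chi x = -\<i>}"
    by (simp add: card_Un_disjoint set_eq_iff complex_eq_iff)
  finally have "4 * f = 4 * card {x. chi x = 1}" using e q_eq by simp
  then have "card {x. chi x = 1} = f" by simp
  then show ?thesis using assms e by auto
qed

end


context cyc
begin

lemma chi_sq_real: "cnj (chi x ^ 2) = chi x ^ 2"
  using chi_vals[of x] by (cases "x = 0") auto

lemma chi_sq_real': "(cnj (chi x)) ^ 2 = chi x ^ 2"
  using chi_sq_real[of x] by simp

lemma chi_neg: "chi (- x) = - chi x"
proof -
  have "chi (-x) = chi (-1 * x)" by simp
  also have "\<dots> = - chi x" by (simp only: chi_mult chi_m1) simp
  finally show ?thesis .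
qed

lemma chi_g_pow: "chi (g ^ k) = \<i> ^ k"
  by (simp add: chi_pow chi_g)

lemma i_pow_mod4: "\<i> ^ k = \<i> ^ (k mod 4)"
proof -
  have "\<i> ^ k = \<i> ^ (4 * (k div 4) + k mod 4)" by simp
  also have "\<dots> = (\<i> ^ 4) ^ (k div 4) * \<i> ^ (k mod 4)" by (simp only: power_add power_mult)
  also have "\<i> ^ 4 = (1::complex)" by (simp add: power4_eq_xxxx)
  finally show ?thesis by simp
qed

lemma i_pow_inj:
  assumes "r < 4" "j < 4" "\<i> ^ r = \<i> ^ j"
  shows "r = j"
proof -
  have "r = 0 \<or> r = 1 \<or> r = 2 \<or> r = 3" "j = 0 \<or> j = 1 \<or> j = 2 \<or> j = 3" using assms by arith+
  then show ?thesis using assms(3)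
    by (elim disjE) (simp_all add: complex_eq_iff power2_eq_square power3_eq_cube)
qed

lemma mem_class:
  assumes "j < 4"
  shows "x \<in> cyc_class g j \<longleftrightarrow> x \<noteq> 0 \<and> chi x = \<i> ^ j"
proof
  assume "x \<in> cyc_class g j"
  then obtain y where y: "x = g ^ j * y ^ 4" "y \<noteq> 0" by (auto simp: cyc_class_def)
  then show "x \<noteq> 0 \<and> chi x = \<i> ^ j"
    using g_ne0 chi_pow4[OF y(2)] by (simp add: chi_mult chi_pow chi_g)
next
  assume a: "x \<noteq> 0 \<and> chi x = \<i> ^ j"
  then obtain k where k: "x = g ^ k" using gen by blast
  have "x = g ^ (k mod 4) * (g ^ (k div 4)) ^ 4"
  proof -
    have "g ^ k = g ^ (k mod 4 + 4 * (k div 4))" by simp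
    then show ?thesis using k by (simp only: power_add power_mult mult.commute[of 4])
  qed
  moreover have "k mod 4 = j"
  proof -
    have "chi x = \<i> ^ k" using k chi_g_pow by simp
    then have "\<i> ^ (k mod 4) = \<i> ^ j" using a i_pow_mod4[of k] by simp
    moreover have "k mod 4 < 4" by simp
    ultimately show ?thesis using assms i_pow_inj by blast
  qed
  moreover have "g ^ (k div 4) \<noteq> 0" using g_ne0 by simp
  ultimately show "x \<in> cyc_class g j" unfolding cyc_class_def by blast
qed

lemma mem_D: "x \<in> cyc_D g \<longleftrightarrow> x \<noteq> 0 \<and> (chi x = 1 \<or> chi x = \<i>)"
  unfolding cyc_D_def using mem_class[of 0 x] mem_class[of 1 x] by auto

lemma D_eq: "cyc_D g = {x. chi x = 1} \<union> {x. chi x = \<i>}"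
  apply (rule Set.set_eqI)
  subgoal for x using mem_D[of x] by (cases "x = 0") simp_all
  done

lemma card_D: "card (cyc_D g) = 2 * f"
proof -
  have "card (cyc_D g) = card {x. chi x = 1} + card {x. chi x = \<i>}"
    unfolding D_eq by (rule card_Un_disjoint) (auto simp: complex_eq_iff)
  then show ?thesis using card_chi_class[of 1] card_chi_class[of "\<i>"] by simp
qed

lemma ind_D: "(if x \<in> cyc_D g then 1 else 0) =
   1/2 + ((1 - \<i>) * chi x + (1 + \<i>) * cnj (chi x)) / 4 - (if x = 0 then 1/2 else 0)"
proof (cases "x = 0")
  case False
  then show ?thesis using chi_vals[of x] mem_D[of x]
    by (auto simp: complex_eq_iff)
qed (simp add: mem_D)

end

context cycpsi
begin

definition G :: complex where "G = (\<Sum>x\<in>UNIV. chi x * psi x)"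
definition Gr :: complex where "Gr = (\<Sum>x\<in>UNIV. chi x ^ 2 * psi x)"
definition J :: complex where "J = (\<Sum>x\<in>UNIV. chi x * chi (1 - x))"

lemma G_norm: "cnj G * G = of_nat CARD('a)"
  unfolding G_def
  by (rule gauss_norm_generic[where c=chi and psi=psi])
     (auto simp: chi_mult chi_cnj_mult sum_chi psi_add psi_norm sum_psi_mult_nz)

lemma Gr_norm: "cnj Gr * Gr = of_nat CARD('a)"
proof -
  have "cnj (\<Sum>x\<in>UNIV. chi x ^ 2 * psi x) * (\<Sum>x\<in>UNIV. chi x ^ 2 * psi x) = of_nat CARD('a)"
  proof (rule gauss_norm_generic[where c="\<lambda>x. chi x ^ 2" and psi=psi])
    fix x :: 'a assume "x \<noteq> 0"
    then show "cnj (chi x ^ 2) * chi x ^ 2 = 1" using chi_vals[of x] by auto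
  qed (auto simp: chi_mult power_mult_distrib sum_chi2 psi_add psi_norm sum_psi_mult_nz)
  then show ?thesis unfolding Gr_def .
qed

lemma Gr_real: "cnj Gr = Gr"
proof -
  have "cnj Gr = (\<Sum>x\<in>UNIV. chi x ^ 2 * psi (- x))"
    unfolding Gr_def by (simp add: cnj_sum psi_neg chi_sq_real')
  also have "\<dots> = (\<Sum>x\<in>UNIV. chi (- x) ^ 2 * psi (- (- x)))"
    by (rule sum_UNIV_neg[symmetric])
  also have "\<dots> = Gr" unfolding Gr_def by (simp add: chi_neg)
  finally show ?thesis .
qed

lemma Gr_sq: "Gr * Gr = of_nat CARD('a)"
  using Gr_norm Gr_real by simp

lemma G_sq: "G * G = J * Gr"
proof -
  have "G * G = (\<Sum>x\<in>UNIV. \<Sum>y\<in>UNIV. chi x * chi y * psi (x + y))"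
    unfolding G_def by (simp add: sum_product psi_add mult_ac)
  also have "\<dots> = (\<Sum>x\<in>UNIV. \<Sum>u\<in>UNIV. chi x * chi (u - x) * psi u)"
  proof (rule sum.cong[OF refl])
    fix x :: 'a
    have "(\<Sum>u\<in>UNIV. chi x * chi (u - x) * psi u) = (\<Sum>y\<in>UNIV. chi x * chi ((y + x) - x) * psi (y + x))"
      by (rule sum_UNIV_shift[symmetric])
    then show "(\<Sum>y\<in>UNIV. chi x * chi y * psi (x + y)) = (\<Sum>u\<in>UNIV. chi x * chi (u - x) * psi u)"
      by (simp add: add.commute)
  qed
  also have "\<dots> = (\<Sum>u\<in>UNIV. psi u * (\<Sum>x\<in>UNIV. chi x * chi (u - x)))"
    by (subst sum.swap) (simp add: sum_distrib_left mult_ac)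
  also have "\<dots> = (\<Sum>u\<in>UNIV. psi u * (chi u ^ 2 * J))"
  proof (rule sum.cong[OF refl])
    fix u :: 'a
    have "(\<Sum>x\<in>UNIV. chi x * chi (u - x)) = chi u ^ 2 * J"
    proof (cases "u = 0")
      case True
      then show ?thesis using sum_chi2 by (simp add: chi_neg power2_eq_square sum_negf)
    next
      case False
      have "(\<Sum>x\<in>UNIV. chi x * chi (u - x)) = (\<Sum>t\<in>UNIV. chi (u * t) * chi (u - u * t))"
        by (rule sum_UNIV_mult[OF False, symmetric])
      also have "\<dots> = (\<Sum>t\<in>UNIV. chi u ^ 2 * (chi t * chi (1 - t)))"
      proof (rule sum.cong[OF refl])
        fix t
        have "u - u * t = u * (1 - t)" by (simp add: algebra_simps)
        then show "chi (u * t) * chi (u - u * t) = chi u ^ 2 * (chi t * chi (1 - t))"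
          by (simp add: chi_mult power2_eq_square mult_ac)
      qed
      finally show ?thesis unfolding J_def by (simp add: sum_distrib_left)
    qed
    then show "psi u * (\<Sum>x\<in>UNIV. chi x * chi (u - x)) = psi u * (chi u ^ 2 * J)" by simp
  qed
  also have "\<dots> = J * Gr" unfolding Gr_def by (simp add: sum_distrib_left mult_ac)
  finally show ?thesis .
qed

definition lam :: "'a \<Rightarrow> complex" where "lam b = (\<Sum>d\<in>cyc_D g. psi (- (b * d)))"

lemma lam_0: "lam 0 = of_nat (2 * f)"
  unfolding lam_def using card_D psi_0 by simp

lemma H_eq: "(\<Sum>x\<in>UNIV. cnj (chi x) * psi x) = - cnj G"
proof -
  have "cnj G = (\<Sum>x\<in>UNIV. cnj (chi x) * psi (- x))"
    unfolding G_def by (simp add: cnj_sum psi_neg)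
  also have "\<dots> = (\<Sum>x\<in>UNIV. cnj (chi (- x)) * psi (- (- x)))"
    by (rule sum_UNIV_neg[symmetric])
  also have "\<dots> = - (\<Sum>x\<in>UNIV. cnj (chi x) * psi x)"
    by (simp add: chi_neg sum_negf)
  finally show ?thesis by simp
qed

lemma lam_nz:
  assumes b: "b \<noteq> 0"
  shows "lam b = -1/2 + ((1 - \<i>) * cnj (chi (-b)) * G - (1 + \<i>) * chi (-b) * cnj G) / 4"
proof -
  define c where "c = inverse (- b)"
  have c0: "c \<noteq> 0" using b by (simp add: c_def)
  have bc: "- (b * (c * z)) = z" for z using b by (simp add: c_def)
  have chic: "chi c = cnj (chi (-b))" unfolding c_def by (rule chi_inverse)
  have S1: "(\<Sum>x\<in>UNIV. psi (- (b * x))) = 0"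
    using sum_psi_mult[of "-b"] b by simp
  have S2: "(\<Sum>x\<in>UNIV. chi x * psi (- (b * x))) = cnj (chi (-b)) * G"
  proof -
    have "(\<Sum>x\<in>UNIV. chi x * psi (- (b * x))) = (\<Sum>z\<in>UNIV. chi (c * z) * psi (- (b * (c * z))))"
      by (rule sum_UNIV_mult[OF c0, symmetric])
    also have "\<dots> = (\<Sum>z\<in>UNIV. cnj (chi (-b)) * (chi z * psi z))"
      by (rule sum.cong[OF refl]) (simp add: bc chi_mult chic mult.assoc)
    also have "\<dots> = cnj (chi (-b)) * G"
      unfolding G_def by (simp add: sum_distrib_left)
    finally show ?thesis .
  qed
  have S3: "(\<Sum>x\<in>UNIV. cnj (chi x) * psi (- (b * x))) = chi (-b) * (- cnj G)"
  proof -
    have "(\<Sum>x\<in>UNIV. cnj (chi x) * psi (- (b * x))) = (\<Sum>z\<in>UNIV. cnj (chi (c * z)) * psi (- (b * (c * z))))"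
      by (rule sum_UNIV_mult[OF c0, symmetric])
    also have "\<dots> = (\<Sum>z\<in>UNIV. chi (-b) * (cnj (chi z) * psi z))"
      by (rule sum.cong[OF refl]) (simp add: bc chi_mult chic mult.assoc)
    also have "\<dots> = chi (-b) * (\<Sum>x\<in>UNIV. cnj (chi x) * psi x)"
      by (simp add: sum_distrib_left)
    finally show ?thesis using H_eq by simp
  qed
  have "lam b = (\<Sum>x\<in>UNIV. (if x \<in> cyc_D g then 1 else 0) * psi (- (b * x)))"
  proof -
    have "lam b = (\<Sum>x\<in>UNIV \<inter> cyc_D g. psi (- (b * x)))" unfolding lam_def by simp
    also have "\<dots> = (\<Sum>x\<in>UNIV. if x \<in> cyc_D g then psi (- (b * x)) else 0)"
      by (rule sum.inter_restrict) simp
    also have "\<dots> = (\<Sum>x\<in>UNIV. (if x \<in> cyc_D g then 1 else 0) * psi (- (b * x)))"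
      by (rule sum.cong) auto
    finally show ?thesis .
  qed
  also have "\<dots> = (\<Sum>x\<in>UNIV. (1/2) * psi (- (b * x)) + ((1 - \<i>) / 4) * (chi x * psi (- (b * x)))
        + ((1 + \<i>) / 4) * (cnj (chi x) * psi (- (b * x))) - (if x = 0 then 1/2 else 0))"
    by (rule sum.cong[OF refl], subst ind_D) (auto simp: algebra_simps psi_0 diff_divide_distrib add_divide_distrib)
  also have "\<dots> = (1/2) * (\<Sum>x\<in>UNIV. psi (- (b * x))) + ((1 - \<i>) / 4) * (\<Sum>x\<in>UNIV. chi x * psi (- (b * x)))
        + ((1 + \<i>) / 4) * (\<Sum>x\<in>UNIV. cnj (chi x) * psi (- (b * x))) - 1/2"
    by (simp add: sum.distrib sum_subtractf sum_distrib_left)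
  also have "\<dots> = -1/2 + ((1 - \<i>) * cnj (chi (-b)) * G - (1 + \<i>) * chi (-b) * cnj G) / 4"
    by (simp only: S1 S2 S3) (simp add: algebra_simps diff_divide_distrib add_divide_distrib)
  finally show ?thesis .
qed

end


lemma even_sum_invol:
  fixes h :: "'b \<Rightarrow> int"
  assumes "finite S" "\<And>x. x \<in> S \<Longrightarrow> sg x \<in> S" "\<And>x. x \<in> S \<Longrightarrow> sg x \<noteq> x"
    "\<And>x. x \<in> S \<Longrightarrow> sg (sg x) = x" "\<And>x. x \<in> S \<Longrightarrow> h (sg x) = h x"
  shows "even (\<Sum>x\<in>S. h x)"
  using assms
proof (induction "card S" arbitrary: S rule: less_induct)
  case less
  show ?case
  proof (cases "S = {}")
    case False
    then obtain x where x: "x \<in> S" by blast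
    define S' where "S' = S - {x, sg x}"
    have sx: "sg x \<in> S" "sg x \<noteq> x" using less.prems x by auto
    have "(\<Sum>y\<in>S. h y) = h x + (\<Sum>y\<in>S - {x}. h y)"
      using less.prems(1) x by (simp add: sum.remove)
    also have "(\<Sum>y\<in>S - {x}. h y) = h (sg x) + (\<Sum>y\<in>S'. h y)"
      using less.prems(1) sx unfolding S'_def
      by (subst sum.remove[of _ "sg x"]) (auto simp: Diff_insert2[symmetric] insert_commute)
    finally have eq: "(\<Sum>y\<in>S. h y) = 2 * h x + (\<Sum>y\<in>S'. h y)"
      using less.prems(5)[OF x] by simp
    have "card S' < card S"
      unfolding S'_def using less.prems(1) x by (intro psubset_card_mono) auto
    moreover have "\<And>y. y \<in> S' \<Longrightarrow> sg y \<in> S'"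
      unfolding S'_def using less.prems x by auto (metis)+
    ultimately have "even (\<Sum>y\<in>S'. h y)"
      using less.prems by (intro less.hyps) (auto simp: S'_def)
    then show ?thesis using eq by simp
  qed simp
qed

lemma choose_not_dvd_small:
  assumes "prime p" "n < p" "k \<le> n"
  shows "\<not> p dvd (n choose k)"
proof
  assume "p dvd (n choose k)"
  show False
  proof (cases "k \<le> n")
    case True
    have "fact n = fact k * fact (n - k) * (n choose k)"
      using binomial_fact_lemma[OF True] by simp
    then have "p dvd fact n" using \<open>p dvd (n choose k)\<close> by simp
    then show False using prime_dvd_fact_iff[OF assms(1)] assms(2) by simp
  next
    case False
    then have "n choose k = 0" by (simp add: binomial_eq_0)
    then show False using \<open>p dvd (n choose k)\<close> assms by simp
  qed
qed

lemma coeff_one_plus_X_power: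
  "Polynomial.coeff ([:1, 1:] ^ r :: 'a::comm_semiring_1 poly) j = of_nat (r choose j)"
proof (cases "j \<le> r")
  case True
  then show ?thesis by (simp add: coeff_linear_poly_power)
next
  case False
  have "degree ([:1, 1:] ^ r :: 'a poly) \<le> r"
    by (rule order.trans[OF degree_power_le]) simp
  then show ?thesis using False by (simp add: coeff_eq_0 binomial_eq_0)
qed

lemma lucas_step:
  fixes m r a s :: nat
  assumes pr: "prime CHAR('a::comm_ring_1)" and r: "r < CHAR('a)" and s: "s < CHAR('a)"
  shows "(of_nat ((CHAR('a) * m + r) choose (CHAR('a) * a + s)) :: 'a) =
         of_nat (m choose a) * of_nat (r choose s)"
proof -
  let ?p = "CHAR('a)"
  let ?X = "[:1, 1:] :: 'a poly"
  have prp: "prime CHAR('a poly)" using pr by simp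
  have "?X = Polynomial.monom 1 0 + Polynomial.monom 1 1" by (simp add: monom_0 monom_Suc)
  then have "?X ^ ?p = (Polynomial.monom 1 0) ^ ?p + (Polynomial.monom 1 1) ^ ?p"
    using freshmans_dream[OF prp] by simp
  also have "\<dots> = Polynomial.monom 1 0 + Polynomial.monom 1 ?p" by (simp add: monom_power)
  finally have Xp: "?X ^ ?p = 1 + Polynomial.monom 1 ?p" by (simp add: monom_0 one_pCons)
  have "?X ^ (?p * m + r) = (?X ^ ?p) ^ m * ?X ^ r" by (simp add: power_add power_mult)
  also have "(?X ^ ?p) ^ m = (\<Sum>i\<le>m. Polynomial.monom (of_nat (m choose i)) (?p * i))"
  proof -
    have "(Polynomial.monom 1 ?p + 1) ^ m = (\<Sum>i\<le>m. of_nat (m choose i) * Polynomial.monom 1 ?p ^ i * 1 ^ (m - i))"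
      by (rule binomial_ring)
    also have "\<dots> = (\<Sum>i\<le>m. Polynomial.monom (of_nat (m choose i)) (?p * i))"
      by (rule sum.cong[OF refl]) (simp add: monom_power of_nat_monom mult_monom mult.commute)
    finally show ?thesis using Xp by (simp add: add.commute)
  qed
  finally have eq: "?X ^ (?p * m + r) = (\<Sum>i\<le>m. Polynomial.monom (of_nat (m choose i)) (?p * i) * ?X ^ r)"
    by (simp add: sum_distrib_right)
  have "(of_nat ((?p * m + r) choose (?p * a + s)) :: 'a) = Polynomial.coeff (?X ^ (?p * m + r)) (?p * a + s)"
    by (simp add: coeff_one_plus_X_power)
  also have "\<dots> = (\<Sum>i\<le>m. if ?p * a + s < ?p * i then 0
      else of_nat (m choose i) * of_nat (r choose (?p * a + s - ?p * i)))"
  proof -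
    have "Polynomial.coeff (?X ^ (?p * m + r)) (?p * a + s) = (\<Sum>i\<le>m. if ?p * a + s < ?p * i then 0
      else of_nat (m choose i) * Polynomial.coeff (?X ^ r) (?p * a + s - ?p * i))"
      unfolding eq by (simp add: coeff_sum coeff_monom_mult)
    also have "\<dots> = (\<Sum>i\<le>m. if ?p * a + s < ?p * i then 0
      else of_nat (m choose i) * of_nat (r choose (?p * a + s - ?p * i)))"
      by (rule sum.cong[OF refl]) (simp only: coeff_one_plus_X_power)
    finally show ?thesis .
  qed
  also have "\<dots> = (\<Sum>i\<le>m. if i = a then of_nat (m choose a) * of_nat (r choose s) else 0)"
  proof (rule sum.cong[OF refl])
    fix i assume "i \<in> {..m}"
    show "(if ?p * a + s < ?p * i then 0
      else of_nat (m choose i) * of_nat (r choose (?p * a + s - ?p * i))) =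
      (if i = a then of_nat (m choose a) * of_nat (r choose s) else (0::'a))"
    proof (cases "i = a")
      case False
      show ?thesis
      proof (cases "i < a")
        case True
        then have "?p * i + ?p \<le> ?p * a" by (metis Suc_leI mult_Suc_right mult_le_mono2 add.commute)
        then have "?p * a + s - ?p * i > r" using r by linarith
        then show ?thesis using False by (auto simp: binomial_eq_0)
      next
        case f2: False
        then have "?p * (a + 1) \<le> ?p * i" using False by (intro mult_le_mono2) linarith
        then have "?p * a + s < ?p * i" using s by (simp add: algebra_simps)
        then show ?thesis using False by simp
      qed
    qed simp
  qed
  also have "\<dots> = of_nat (m choose a) * of_nat (r choose s)"
    by (cases "a \<le> m") (simp_all add: sum.delta binomial_eq_0)
  finally show ?thesis .
qed

lemma pow_mod_one:
  fixes a m :: nat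
  assumes "a mod m = 1" "m > 1"
  shows "a ^ j mod m = 1"
proof (induction j)
  case (Suc j)
  have "a ^ Suc j mod m = ((a mod m) * (a ^ j mod m)) mod m" by (simp add: mod_mult_eq)
  also have "\<dots> = 1" using Suc assms by simp
  finally show ?case .
qed (use assms in simp)

lemma odd_sq_mod8: "odd (p::nat) \<Longrightarrow> p ^ 2 mod 8 = 1"
proof -
  assume "odd p"
  then obtain t where "p = 2 * t + 1" by (meson oddE)
  then have "p ^ 2 = 4 * (t * (t + 1)) + 1" by (simp add: power2_eq_square algebra_simps)
  moreover have "even (t * (t + 1))" by simp
  then obtain u where "t * (t + 1) = 2 * u" by (elim evenE)
  ultimately have "p ^ 2 = 8 * u + 1" by simp
  then show ?thesis by simp
qed

lemma prime_mod4_from_power: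
  assumes "odd (p::nat)" "p ^ k mod 8 = 5"
  shows "p mod 4 = 1"
proof -
  have sq: "(p ^ 2) ^ j mod 8 = 1" for j
    using odd_sq_mod8[OF assms(1)] by (rule pow_mod_one) simp
  show ?thesis
  proof (cases "even k")
    case True
    then obtain j where "k = 2 * j" by (elim evenE)
    then show ?thesis using assms(2) sq[of j] by (simp add: power_mult)
  next
    case False
    then obtain j where "k = 2 * j + 1" by (elim oddE)
    then have "p ^ k = p * (p ^ 2) ^ j" by (simp add: power_mult power_add)
    then have "p ^ k mod 8 = (p mod 8) * ((p ^ 2) ^ j mod 8) mod 8" by (metis mod_mult_eq)
    then have "p mod 8 = 5" using assms(2) sq[of j] by simp
    then show ?thesis by presburger
  qed
qed

lemma lucas_3f:
  assumes pr: "prime CHAR('a::field)" and p4: "CHAR('a) mod 4 = 1"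
  shows "(of_nat ((3 * ((CHAR('a) ^ k - 1) div 4)) choose ((CHAR('a) ^ k - 1) div 4)) :: 'a) \<noteq> 0"
proof (induction k)
  case 0 then show ?case by simp
next
  case (Suc k)
  let ?p = "CHAR('a)"
  define e where "e = (?p - 1) div 4"
  define F where "F = (?p ^ k - 1) div 4"
  have p1: "?p \<ge> 1" using pr prime_ge_1_nat by blast
  have pe: "?p = 4 * e + 1" using p4 p1 unfolding e_def by presburger
  have pk: "?p ^ k mod 4 = 1" using p4 by (rule pow_mod_one) simp
  have pk1: "?p ^ k \<ge> 1" using p1 by simp
  have pkF: "?p ^ k = 4 * F + 1" using pk pk1 unfolding F_def by presburger
  have "?p ^ Suc k = 4 * (?p * F + e) + 1" using pkF pe by (simp add: algebra_simps)
  then have FS: "(?p ^ Suc k - 1) div 4 = ?p * F + e" by simp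
  have 3: "3 * (?p * F + e) = ?p * (3 * F) + 3 * e" by simp
  have "(of_nat ((?p * (3 * F) + 3 * e) choose (?p * F + e)) :: 'a) =
        of_nat ((3 * F) choose F) * of_nat ((3 * e) choose e)"
    by (rule lucas_step[OF pr]) (use pe in auto)
  moreover have "(of_nat ((3 * F) choose F) :: 'a) \<noteq> 0" using Suc F_def by simp
  moreover have "(of_nat ((3 * e) choose e) :: 'a) \<noteq> 0"
    using choose_not_dvd_small[OF pr, of "3 * e" e] pe by (simp add: of_nat_eq_0_iff_char_dvd)
  ultimately show ?case by (simp only: FS 3) simp
qed

context cyc
begin

lemma of_nat_card: "(of_nat CARD('a) :: 'a) = 0"
  by (simp add: of_nat_eq_0_iff_char_dvd ff_CHAR_dvd_CARD)

lemma power_sum: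
  assumes "m > 0"
  shows "(\<Sum>t\<in>UNIV. (t::'a) ^ m) = (if (CARD('a) - 1) dvd m then -1 else 0)"
proof (cases "(CARD('a) - 1) dvd m")
  case True
  then obtain l where l: "m = (CARD('a) - 1) * l" by blast
  have "(\<Sum>t\<in>UNIV. (t::'a) ^ m) = 0 ^ m + (\<Sum>t\<in>UNIV-{0}. t ^ m)"
    by (subst sum.remove[of _ 0]) auto
  also have "(\<Sum>t\<in>UNIV-{0}. (t::'a) ^ m) = (\<Sum>t\<in>UNIV-{0::'a}. 1)"
  proof (rule sum.cong[OF refl])
    fix t :: 'a assume "t \<in> UNIV - {0}"
    then have "t ^ (CARD('a) - 1) = 1" by (intro ff_pow_card_minus1) simp
    moreover have "t ^ m = (t ^ (CARD('a) - 1)) ^ l" by (simp only: l power_mult)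
    ultimately show "t ^ m = 1" by simp
  qed
  also have "\<dots> = of_nat (CARD('a) - 1)" using card_nonzero by simp
  also have "\<dots> = -1" using of_nat_card q_ge5 by (simp add: of_nat_diff)
  finally show ?thesis using True assms by simp
next
  case False
  have "g ^ m = g ^ ((CARD('a) - 1) * (m div (CARD('a) - 1)) + m mod (CARD('a) - 1))" by simp
  also have "\<dots> = g ^ (m mod (CARD('a) - 1))" by (simp only: power_add power_mult g_pow_q1) simp
  finally have gm: "g ^ m = g ^ (m mod (CARD('a) - 1))" .
  have "m mod (CARD('a) - 1) \<noteq> 0" using False by (simp only: mod_eq_0_iff_dvd) simp
  moreover have "m mod (CARD('a) - 1) < CARD('a) - 1" using q_ge5 by (intro mod_less_divisor) simp
  ultimately have "g ^ m \<noteq> 1" using gm g_pow_ne1[of "m mod (CARD('a) - 1)"] by simp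
  have "(\<Sum>t\<in>UNIV. (t::'a) ^ m) = (\<Sum>t\<in>UNIV. (g * t) ^ m)"
    by (rule sum_UNIV_mult[OF g_ne0, symmetric])
  also have "\<dots> = g ^ m * (\<Sum>t\<in>UNIV. t ^ m)" by (simp add: power_mult_distrib sum_distrib_left)
  finally have "(1 - g ^ m) * (\<Sum>t\<in>UNIV. (t::'a) ^ m) = 0" by (simp add: algebra_simps)
  then show ?thesis using False \<open>g ^ m \<noteq> 1\<close> by simp
qed

lemma sum_3f: "(\<Sum>t\<in>UNIV. ((t::'a) * (1 - t)) ^ (3 * f)) = of_nat ((3 * f) choose f)"
proof -
  let ?n = "3 * f"
  have "(\<Sum>t\<in>UNIV. ((t::'a) * (1 - t)) ^ ?n)
      = (\<Sum>t\<in>UNIV. \<Sum>k\<le>?n. of_nat (?n choose k) * (-1) ^ k * t ^ (?n + k))"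
  proof (rule sum.cong[OF refl])
    fix t :: 'a
    have "(1 - t) ^ ?n = (-t + 1) ^ ?n" by simp
    also have "\<dots> = (\<Sum>k\<le>?n. of_nat (?n choose k) * (-t) ^ k * 1 ^ (?n - k))" by (rule binomial_ring)
    finally have "(1 - t) ^ ?n = (\<Sum>k\<le>?n. of_nat (?n choose k) * (-1) ^ k * t ^ k)"
      by (simp add: power_minus_mult[symmetric] power_mult_distrib[symmetric] mult.assoc)
    then show "(t * (1 - t)) ^ ?n = (\<Sum>k\<le>?n. of_nat (?n choose k) * (-1) ^ k * t ^ (?n + k))"
      by (simp add: power_mult_distrib sum_distrib_left power_add mult_ac)
  qed
  also have "\<dots> = (\<Sum>k\<le>?n. of_nat (?n choose k) * (-1) ^ k * (\<Sum>t\<in>UNIV. t ^ (?n + k)))"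
    by (subst sum.swap) (simp add: sum_distrib_left)
  also have "\<dots> = (\<Sum>k\<le>?n. if k = f then of_nat (?n choose f) else 0)"
  proof (rule sum.cong[OF refl])
    fix k assume k: "k \<in> {..?n}"
    have pos: "?n + k > 0" using f_pos by simp
    have dv: "(CARD('a) - 1) dvd (?n + k) \<longleftrightarrow> k = f"
    proof
      assume "(CARD('a) - 1) dvd (?n + k)"
      then obtain l where l: "?n + k = 4 * f * l" using q_eq by auto
      have "l \<ge> 1" using l pos by (cases l) auto
      moreover have "l < 2"
      proof (rule ccontr)
        assume "\<not> l < 2"
        then have a: "4 * f * 2 \<le> 4 * f * l" by (intro mult_le_mono2) simp
        have "k \<le> 3 * f" using k by simp
        then show False using a l f_pos by linarith
      qed
      ultimately have "l = 1" by simp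
      then show "k = f" using l by simp
    qed (simp add: q_eq)
    show "of_nat (?n choose k) * (-1) ^ k * (\<Sum>t\<in>UNIV. (t::'a) ^ (?n + k)) =
          (if k = f then of_nat (?n choose f) else 0)"
      using power_sum[OF pos] dv f_odd by auto
  qed
  also have "\<dots> = of_nat (?n choose f)" using f_pos by simp
  finally show ?thesis .
qed

definition tm :: "'a \<Rightarrow> complex" where "tm t = chi t * chi (1 - t)"
definition ire :: "'a \<Rightarrow> int" where "ire t = (if tm t = 1 then 1 else if tm t = -1 then -1 else 0)"
definition iim :: "'a \<Rightarrow> int" where "iim t = (if tm t = \<i> then 1 else if tm t = -\<i> then -1 else 0)"

lemma tm_vals: "tm t \<in> {0, 1, \<i>, -1, -\<i>}"
  unfolding tm_def chi_mult[symmetric] using chi_vals[of "t * (1 - t)"]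
  by (cases "t * (1 - t) = 0") auto

lemma tm_decomp: "tm t = of_int (ire t) + \<i> * of_int (iim t)"
  using tm_vals[of t] by (auto simp: ire_def iim_def complex_eq_iff)

definition JX :: int where "JX = (\<Sum>t\<in>UNIV. ire t)"
definition JY :: int where "JY = (\<Sum>t\<in>UNIV. iim t)"

lemma J_decomp: "(\<Sum>t\<in>UNIV. chi t * chi (1 - t)) = of_int JX + \<i> * of_int JY"
  unfolding JX_def JY_def tm_def[symmetric] by (simp add: tm_decomp sum.distrib sum_distrib_left)

lemma JY_even: "even JY"
proof -
  define h where "h = inverse (2::'a)"
  have h1: "1 - h = h" using two_ne0 unfolding h_def by (simp add: field_simps)
  have fix_iff: "1 - t = t \<longleftrightarrow> t = h" for t :: 'a
    using two_ne0 unfolding h_def by (auto simp: field_simps)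
  have "iim h = 0"
  proof -
    have "tm h = chi h ^ 2" unfolding tm_def h1 by (simp add: power2_eq_square)
    moreover have "h \<noteq> 0" using two_ne0 by (simp add: h_def)
    ultimately have "tm h = 1 \<or> tm h = -1" using chi_vals[of h] by (auto simp: power2_eq_square)
    then show ?thesis by (auto simp: iim_def complex_eq_iff)
  qed
  have "JY = iim h + (\<Sum>t\<in>UNIV - {h}. iim t)"
    unfolding JY_def by (subst sum.remove[of _ h]) auto
  moreover have "even (\<Sum>t\<in>UNIV - {h}. iim t)"
  proof (rule even_sum_invol[where sg="\<lambda>t. 1 - t"])
    fix x assume "x \<in> UNIV - {h}"
    then have xh: "x \<noteq> h" by simp
    show "1 - x \<in> UNIV - {h}"
    proof
      show "1 - x \<notin> {h}"
      proof
        assume "1 - x \<in> {h}"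
        then have "x = 1 - h" by (simp add: algebra_simps)
        then show False using h1 xh by simp
      qed
    qed simp
    show "1 - x \<noteq> x" using fix_iff[of x] xh by blast
    show "1 - (1 - x) = x" by simp
    show "iim (1 - x) = iim x" unfolding iim_def tm_def by (simp add: mult.commute)
  qed simp
  ultimately show ?thesis using \<open>iim h = 0\<close> by simp
qed

lemma iota_cube: "iota ^ 3 = - iota"
  using iota_sq by (simp add: power3_eq_cube power2_eq_square mult.assoc[symmetric])

lemma tm_modp: "(t * (1 - t)) ^ (3 * f) = of_int (ire t) - iota * of_int (iim t)"
proof (cases "t * (1 - t) = 0")
  case True
  have "tm t = 0" unfolding tm_def chi_mult[symmetric] True by simp
  then have "ire t = 0" "iim t = 0" by (simp_all add: ire_def iim_def)
  moreover have "(t * (1 - t)) ^ (3 * f) = 0" using f_pos by (subst True) simp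
  ultimately show ?thesis by simp
next
  case False
  define u where "u = (t * (1 - t)) ^ f"
  have u: "u \<in> M4" using pow_f_M4[OF False] by (simp add: u_def)
  have "tm t = chi (t * (1 - t))" by (simp add: tm_def chi_mult)
  also have "\<dots> = w u" by (simp add: chi_def u_def)
  finally have tmu: "tm t = w u" .
  have "(t * (1 - t)) ^ (3 * f) = u ^ 3" by (simp add: u_def power_mult mult.commute)
  also have "\<dots> = of_int (ire t) - iota * of_int (iim t)"
    using u iota_ne iota_cube one_ne_m1 iota_sq
    by (auto simp: M4_def ire_def iim_def tmu w_vals complex_eq_iff power2_eq_square power3_eq_cube)
  finally show ?thesis .
qed

lemma JXY_modp: "(of_int JX :: 'a) - iota * of_int JY = of_nat ((3 * f) choose f)"
proof -
  have "(of_int JX :: 'a) - iota * of_int JY = (\<Sum>t\<in>UNIV. of_int (ire t) - iota * of_int (iim t))"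
    unfolding JX_def JY_def by (simp add: sum_subtractf sum_distrib_left)
  also have "\<dots> = (\<Sum>t\<in>UNIV. (t * (1 - t)) ^ (3 * f))" by (simp add: tm_modp)
  also have "\<dots> = of_nat ((3 * f) choose f)" by (rule sum_3f)
  finally show ?thesis .
qed

lemma CHAR_mod4: "CHAR('a) mod 4 = 1"
proof -
  obtain k where k: "CARD('a) = CHAR('a) ^ k" using ff_card_prime_power by blast
  show ?thesis using prime_mod4_from_power[OF CHAR_odd, of k] k q5 by simp
qed

lemma binom_ne0: "(of_nat ((3 * f) choose f) :: 'a) \<noteq> 0"
proof -
  obtain k where k: "CARD('a) = CHAR('a) ^ k" using ff_card_prime_power by blast
  have "f = (CHAR('a) ^ k - 1) div 4" unfolding f_def k ..
  then show ?thesis using lucas_3f[OF ff_prime_char CHAR_mod4, of k] by simp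
qed

lemma JXY_not_both_dvd: "\<not> (int CHAR('a) dvd JX \<and> int CHAR('a) dvd JY)"
proof
  assume "int CHAR('a) dvd JX \<and> int CHAR('a) dvd JY"
  then have "(of_int JX :: 'a) = 0" "(of_int JY :: 'a) = 0"
    by (simp_all add: of_int_eq_0_iff_char_dvd)
  then show False using JXY_modp binom_ne0 by simp
qed

end


lemma ff_pow_card: "(x::'a::{field,finite}) ^ CARD('a) = x"
proof (cases "x = 0")
  case True then show ?thesis by simp
next
  case False
  have "CARD('a) = Suc (CARD('a) - 1)" using finite_UNIV_card_ge_0[where 'a='a] by simp
  then have "x ^ CARD('a) = x * x ^ (CARD('a) - 1)" by (metis power_Suc)
  then show ?thesis using ff_pow_card_minus1[OF False] by simp
qed

lemma prime_field_elems:
  fixes y :: "'a::{field,finite}"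
  assumes "y ^ CHAR('a) = y"
  shows "\<exists>n < CHAR('a). y = of_nat n"
proof -
  let ?p = "CHAR('a)"
  have pr: "prime ?p" by (rule ff_prime_char)
  have p2: "?p \<ge> 2" using pr prime_ge_2_nat by blast
  have ofn: "(of_nat n :: 'a) ^ ?p = of_nat n" for n
  proof (induction n)
    case 0 then show ?case using p2 by simp
  next
    case (Suc n)
    have "(of_nat (Suc n) :: 'a) ^ ?p = (of_nat n + 1) ^ ?p" by (simp add: add.commute)
    also have "\<dots> = of_nat n ^ ?p + 1 ^ ?p" by (rule freshmans_dream[OF pr refl])
    finally show ?case using Suc by simp
  qed
  define Q :: "'a poly" where "Q = Polynomial.monom 1 ?p - [:0, 1:]"
  have "Polynomial.coeff [:0, 1::'a:] ?p = 0" by (rule coeff_eq_0) (use p2 in simp)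
  then have Qc: "Polynomial.coeff Q ?p = 1" by (simp add: Q_def)
  then have Q0: "Q \<noteq> 0" by auto
  have degQ: "Polynomial.degree Q \<le> ?p"
    unfolding Q_def by (rule order.trans[OF degree_diff_le_max]) (use p2 in \<open>auto simp: degree_monom_le\<close>)
  have polyQ: "poly Q x = x ^ ?p - x" for x by (simp add: Q_def poly_monom)
  have sub: "of_nat ` {..<?p} \<subseteq> {x. poly Q x = 0}"
    using ofn polyQ by auto
  have inj: "inj_on (of_nat :: nat \<Rightarrow> 'a) {..<?p}"
    by (auto simp: inj_on_def of_nat_eq_iff_cong_CHAR cong_def)
  have "card {x. poly Q x = 0} \<le> ?p" using card_poly_roots_bound[OF Q0] degQ by simp
  moreover have "card (of_nat ` {..<?p} :: 'a set) = ?p" using inj by (simp add: card_image)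
  moreover have "card (of_nat ` {..<?p} :: 'a set) \<le> card {x::'a. poly Q x = 0}"
    by (rule card_mono[OF _ sub]) simp
  ultimately have eq: "of_nat ` {..<?p} = {x::'a. poly Q x = 0}"
    using sub by (intro card_subset_eq) auto
  have "y \<in> {x. poly Q x = 0}" using assms polyQ by simp
  then show ?thesis unfolding eq[symmetric] by auto
qed

lemma exists_psi:
  "\<exists>psi::'a::{field,finite} \<Rightarrow> complex. (\<forall>x y. psi (x + y) = psi x * psi y)
      \<and> (\<forall>x. cnj (psi x) * psi x = 1) \<and> (\<exists>c. psi c \<noteq> 1)"
proof -
  let ?p = "CHAR('a)"
  have pr: "prime ?p" by (rule ff_prime_char)
  have p2: "?p \<ge> 2" using pr prime_ge_2_nat by blast
  obtain k where k: "CARD('a) = ?p ^ k" using ff_card_prime_power by blast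
  have "CARD('a) \<ge> 2"
  proof -
    have "card {0, 1::'a} \<le> CARD('a)" by (rule card_mono) auto
    then show ?thesis by simp
  qed
  then have k1: "k \<ge> 1" using k by (cases k) auto
  define Tr :: "'a \<Rightarrow> 'a" where "Tr x = (\<Sum>j<k. x ^ (?p ^ j))" for x
  have Tr_add: "Tr (x + y) = Tr x + Tr y" for x y
    unfolding Tr_def by (simp add: freshmans_dream'[OF pr refl] sum.distrib)
  have Tr_pow: "Tr x ^ ?p = Tr x" for x
  proof -
    have "Tr x ^ ?p = (\<Sum>j<k. (x ^ (?p ^ j)) ^ ?p)"
      unfolding Tr_def by (rule freshmans_dream_sum[OF pr refl])
    also have "\<dots> = (\<Sum>j<k. x ^ (?p ^ Suc j))" by (simp add: power_mult[symmetric] mult.commute)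
    also have "\<dots> = Tr x"
    proof -
      have "(\<Sum>j<Suc k. x ^ (?p ^ j)) = x ^ (?p ^ 0) + (\<Sum>j<k. x ^ (?p ^ Suc j))"
        by (rule sum.lessThan_Suc_shift)
      moreover have "(\<Sum>j<Suc k. x ^ (?p ^ j)) = (\<Sum>j<k. x ^ (?p ^ j)) + x ^ (?p ^ k)"
        by simp
      moreover have "x ^ (?p ^ k) = x" using ff_pow_card[of x] k by simp
      ultimately show ?thesis unfolding Tr_def by simp
    qed
    finally show ?thesis .
  qed
  have "\<exists>c. Tr c \<noteq> 0"
  proof (rule ccontr)
    assume "\<not> (\<exists>c. Tr c \<noteq> 0)"
    then have allz: "Tr c = 0" for c by blast
    define T :: "'a poly" where "T = (\<Sum>j<k. Polynomial.monom 1 (?p ^ j))"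
    have polyT: "poly T x = Tr x" for x by (simp add: T_def Tr_def poly_sum poly_monom)
    have coeffT: "Polynomial.coeff T n = (\<Sum>j<k. if ?p ^ j = n then 1 else 0)" for n
      by (simp add: T_def coeff_sum)
    have "Polynomial.coeff T 1 = 1"
    proof -
      have "(\<Sum>j<k. if ?p ^ j = 1 then (1::'a) else 0) = (\<Sum>j<k. if j = 0 then 1 else 0)"
        by (rule sum.cong[OF refl]) (use p2 in auto)
      also have "\<dots> = 1" using k1 by simp
      finally show ?thesis using coeffT by simp
    qed
    then have T0: "T \<noteq> 0" by auto
    have "Polynomial.degree T \<le> ?p ^ (k - 1)"
    proof (rule degree_le, intro allI impI)
      fix n assume n: "?p ^ (k - 1) < n"
      have "?p ^ j \<noteq> n" if "j < k" for j
      proof -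
        have "?p ^ j \<le> ?p ^ (k - 1)" using that p2 by (intro power_increasing) auto
        then show ?thesis using n by simp
      qed
      then show "Polynomial.coeff T n = 0" unfolding coeffT by (intro sum.neutral) auto
    qed
    moreover have "{x. poly T x = 0} = UNIV" using polyT allz by auto
    ultimately have "CARD('a) \<le> ?p ^ (k - 1)" using card_poly_roots_bound[OF T0] by simp
    moreover have "?p ^ (k - 1) < ?p ^ k" using p2 k1 by (intro power_strict_increasing) auto
    ultimately show False using k by simp
  qed
  then obtain c where c: "Tr c \<noteq> 0" by blast
  define tn where "tn x = (SOME n. n < ?p \<and> Tr x = of_nat n)" for x
  have tn: "tn x < ?p \<and> Tr x = of_nat (tn x)" for x
    unfolding tn_def by (rule someI_ex) (use prime_field_elems[OF Tr_pow] in blast)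
  define z where "z = cis (2 * pi / real ?p)"
  have "z ^ ?p = cis (real ?p * (2 * pi / real ?p))" unfolding z_def by (rule Complex.DeMoivre)
  then have zp: "z ^ ?p = 1" using p2 by simp
  have zmod: "z ^ a = z ^ (a mod ?p)" for a
  proof -
    have "z ^ a = (z ^ ?p) ^ (a div ?p) * z ^ (a mod ?p)"
      by (simp add: power_mult[symmetric] power_add[symmetric])
    then show ?thesis using zp by simp
  qed
  define psi where "psi x = z ^ tn x" for x
  have "psi (x + y) = psi x * psi y" for x y
  proof -
    have "(of_nat (tn (x + y)) :: 'a) = of_nat (tn x + tn y)" using tn Tr_add by (metis of_nat_add)
    then have "tn (x + y) mod ?p = (tn x + tn y) mod ?p"
      by (simp only: of_nat_eq_iff_cong_CHAR cong_def)
    then show ?thesis unfolding psi_def by (metis zmod power_add)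
  qed
  moreover have "cnj (psi x) * psi x = 1" for x
    unfolding psi_def z_def Complex.DeMoivre by (simp add: cis_cnj cis_mult)
  moreover have "psi c \<noteq> 1"
  proof
    assume "psi c = 1"
    then have "cis (real (tn c) * (2 * pi / real ?p)) = 1" unfolding psi_def z_def Complex.DeMoivre .
    then have "cos (real (tn c) * (2 * pi / real ?p)) = 1" by (metis cis.sel(1) one_complex.sel(1))
    then obtain n :: int where n: "real (tn c) * (2 * pi / real ?p) = real_of_int n * 2 * pi"
      using cos_one_2pi_int by blast
    then have "real (tn c) = real_of_int n * real ?p" using p2 by (simp add: field_simps)
    then have e: "int (tn c) = n * int ?p" by (metis of_int_eq_iff of_int_mult of_int_of_nat_eq)
    have "tn c \<noteq> 0"
    proof
      assume "tn c = 0"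
      then show False using c tn[of c] by simp
    qed
    moreover have "tn c < ?p" using tn by blast
    ultimately have a: "0 < n * int ?p" "n * int ?p < int ?p" using e by linarith+
    have pp: "int ?p > 0" using p2 by simp
    then have "n > 0" using a(1) by (simp add: zero_less_mult_iff)
    then have "1 * int ?p \<le> n * int ?p" using pp by (intro mult_right_mono) auto
    then show False using a(2) by simp
  qed
  ultimately show ?thesis by blast
qed


lemma sum_const_poly: "(\<Sum>y\<in>S. [:h y:]) = [:\<Sum>y\<in>S. h y:]"
  by (induction S rule: infinite_finite_induct) auto

lemma sum_UNIV_diff:
  fixes h :: "'a::{ab_group_add,finite} \<Rightarrow> 'b::comm_monoid_add"
  shows "(\<Sum>y\<in>UNIV. h (x - y)) = (\<Sum>y\<in>UNIV. h y)"
proof -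
  have "bij_betw (\<lambda>y::'a. x - y) UNIV UNIV"
    by (rule bij_betwI[of _ _ _ "\<lambda>y::'a. x - y"]) auto
  then show ?thesis by (rule sum.reindex_bij_betw)
qed

lemma order_linear_factor:
  "order z [:-a, 1:] = (if z = a then 1 else (0::nat))" for a z :: "'a::idom"
proof (cases "z = a")
  case True
  then show ?thesis using order_power_n_n[of a 1] by simp
next
  case False
  then show ?thesis by (simp add: order_0I)
qed

lemma order_prod_linear:
  fixes h :: "'b \<Rightarrow> 'a::idom"
  assumes "finite S"
  shows "order z (\<Prod>b\<in>S. [:- h b, 1:]) = card {b\<in>S. h b = z}"
  using assms
proof (induction S rule: finite_induct)
  case empty
  then show ?case by (simp add: order_0I)
next
  case (insert x S)
  have nz: "(\<Prod>b\<in>S. [:- h b, 1:]) \<noteq> 0" using insert.hyps(1) by (simp add: prod_zero_iff)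
  have "order z (\<Prod>b\<in>insert x S. [:- h b, 1:]) = order z ([:- h x, 1:] * (\<Prod>b\<in>S. [:- h b, 1:]))"
    using insert.hyps by simp
  also have "\<dots> = order z [:- h x, 1:] + order z (\<Prod>b\<in>S. [:- h b, 1:])"
  proof (rule order_mult)
    have "[:- h x, 1:] \<noteq> 0" by simp
    then show "[:- h x, 1:] * (\<Prod>b\<in>S. [:- h b, 1:]) \<noteq> 0" using nz by (simp only: mult_eq_0_iff) blast
  qed
  also have "\<dots> = (if z = h x then 1 else 0) + card {b\<in>S. h b = z}"
    using insert.IH order_linear_factor[of z "h x"] by simp
  also have "\<dots> = card {b\<in>insert x S. h b = z}"
  proof (cases "h x = z")
    case True
    have "{b\<in>insert x S. h b = z} = insert x {b\<in>S. h b = z}" using True by auto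
    then show ?thesis using True insert.hyps by simp
  next
    case False
    have "{b\<in>insert x S. h b = z} = {b\<in>S. h b = z}" using False by auto
    then show ?thesis using False by simp
  qed
  finally show ?case .
qed

lemma roots_prod_linear:
  fixes h :: "'b::finite \<Rightarrow> 'a::idom"
  shows "{z. poly (\<Prod>b\<in>UNIV. [:- h b, 1:]) z = 0} = range h"
  by (auto simp: poly_prod prod_zero_iff)

context cycpsi
begin

lemma ct_adj_entry: "ct_adj g $ x $ y = (if x - y \<in> cyc_D g then 1 else 0)"
  by (simp add: ct_adj_def)

lemma AF: "(\<Sum>y\<in>UNIV. ct_adj g $ x $ y * psi (b * y)) = psi (b * x) * lam b"
proof -
  define h where "h d = (if d \<in> cyc_D g then 1 else 0) * psi (b * (x - d))" for d
  have "(\<Sum>y\<in>UNIV. ct_adj g $ x $ y * psi (b * y)) = (\<Sum>y\<in>UNIV. h (x - y))"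
  proof (rule sum.cong[OF refl])
    fix y
    have "x - (x - y) = y" by simp
    then show "ct_adj g $ x $ y * psi (b * y) = h (x - y)" by (simp only: h_def ct_adj_entry)
  qed
  also have "\<dots> = (\<Sum>d\<in>UNIV. h d)" by (rule sum_UNIV_diff)
  also have "\<dots> = (\<Sum>d\<in>UNIV. (if d \<in> cyc_D g then 1 else 0) * psi (b * (x - d)))"
    by (simp only: h_def)
  also have "\<dots> = (\<Sum>d\<in>UNIV. if d \<in> cyc_D g then psi (b * x) * psi (- (b * d)) else 0)"
  proof (rule sum.cong[OF refl])
    fix d
    have "b * (x - d) = b * x + - (b * d)" by (simp add: algebra_simps)
    then have "psi (b * (x - d)) = psi (b * x + - (b * d))" by (rule arg_cong)
    also have "\<dots> = psi (b * x) * psi (- (b * d))" by (rule psi_add)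
    finally show "(if d \<in> cyc_D g then 1 else 0) * psi (b * (x - d)) =
      (if d \<in> cyc_D g then psi (b * x) * psi (- (b * d)) else 0)" by simp
  qed
  also have "\<dots> = (\<Sum>d\<in>UNIV \<inter> cyc_D g. psi (b * x) * psi (- (b * d)))"
    by (rule sum.inter_restrict[symmetric]) simp
  also have "\<dots> = psi (b * x) * lam b" by (simp add: lam_def sum_distrib_left)
  finally show ?thesis .
qed

lemma charpoly_prod: "charpoly (ct_adj g) = (\<Prod>b\<in>UNIV. [:- lam b, 1:])"
proof -
  define A where "A = ct_adj g"
  define M where
    "M = (\<chi> i j. (if i = j then [:0, 1:] else 0) - [:A $ i $ j:])"
  define P where "P = (\<chi> i j. [:psi (j * i):])"
  define P' where "P' = (\<chi> i j. [:psi (- (i * j)):])"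
  define N where "N = (\<chi> i j. if i = j then [:- lam i, 1:] else 0)"
  have MP: "M ** P = P ** N"
  proof -
    have "(M ** P) $ x $ b = (P ** N) $ x $ b" for x b
    proof -
      have "(M ** P) $ x $ b = (\<Sum>k\<in>UNIV. ((if x = k then [:0, 1:] else 0) - [:A $ x $ k:]) * [:psi (b * k):])"
        by (simp only: M_def P_def matrix_matrix_mult_def vec_lambda_beta)
      also have "\<dots> = (\<Sum>k\<in>UNIV. (if x = k then [:0, psi (b * k):] else 0) - [:A $ x $ k * psi (b * k):])"
        by (rule sum.cong[OF refl]) (auto simp: algebra_simps)
      also have "\<dots> = [:0, psi (b * x):] - [:psi (b * x) * lam b:]"
        by (simp add: sum_subtractf sum_const_poly AF[folded A_def])
      also have "\<dots> = [:0, 1:] * [:psi (b * x):] - [:psi (b * x) * lam b:]" by simp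
      also have "\<dots> = [:psi (b * x):] * [:- lam b, 1:]"
        by simp
      also have "\<dots> = (P ** N) $ x $ b"
        unfolding P_def N_def matrix_matrix_mult_def
        by (simp add: if_distrib[of "\<lambda>t. _ * t"] cong: if_cong)
      finally show ?thesis .
    qed
    then show ?thesis by (simp add: vec_eq_iff)
  qed
  have PP': "P ** P' = (\<chi> i j. if i = j then [:of_nat CARD('a):] else 0)"
  proof -
    have "(P ** P') $ x $ z = (if x = z then [:of_nat CARD('a):] else 0)" for x z
    proof -
      have "(P ** P') $ x $ z = (\<Sum>b\<in>UNIV. [:psi (b * x):] * [:psi (- (b * z)):])"
        by (simp only: P_def P'_def matrix_matrix_mult_def vec_lambda_beta)
      also have "\<dots> = (\<Sum>b\<in>UNIV. [:psi ((x - z) * b):])"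
      proof (rule sum.cong[OF refl])
        fix b
        have "(x - z) * b = b * x + - (b * z)" by (simp add: algebra_simps)
        then have "psi ((x - z) * b) = psi (b * x) * psi (- (b * z))" by (simp only: psi_add)
        then show "[:psi (b * x):] * [:psi (- (b * z)):] = [:psi ((x - z) * b):]" by simp
      qed
      also have "\<dots> = [:\<Sum>b\<in>UNIV. psi ((x - z) * b):]" by (rule sum_const_poly)
      also have "\<dots> = (if x = z then [:of_nat CARD('a):] else 0)"
        by (simp add: sum_psi_mult)
      finally show ?thesis .
    qed
    then show ?thesis by (simp add: vec_eq_iff)
  qed
  have "det (P ** P') = (\<Prod>i\<in>(UNIV::'a set). [:of_nat CARD('a):])"
    unfolding PP' by (subst det_diagonal) auto
  then have "det P * det P' \<noteq> 0" by (simp add: det_mul)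
  then have detP: "det P \<noteq> 0" by auto
  have "det M * det P = det P * det N"
    using arg_cong[OF MP, of det] by (simp add: det_mul)
  then have "det M = det N" using detP by (simp add: mult.commute)
  also have "det N = (\<Prod>b\<in>UNIV. [:- lam b, 1:])"
    unfolding N_def by (subst det_diagonal) auto
  finally show ?thesis unfolding charpoly_def M_def A_def .
qed

end


lemma int_rep_aux:
  fixes X Y s e Q :: int
  assumes e: "e * e = 1" and Qd: "Q dvd (X * s + 2 * e * Y)" and XY: "X^2 + Y^2 = Q"
    and Qs: "Q = s^2 + 4" and Ye: "even Y" and so: "odd s"
  shows "Y^2 = 4"
proof -
  have "s^2 \<ge> 0" by simp
  then have Qpos: "Q > 0" using Qs by linarith
  obtain m where m: "X * s + 2 * e * Y = Q * m" using Qd by blast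
  have id: "(X * s + 2 * e * Y)^2 + (2 * X - e * s * Y)^2
      = (X^2 + Y^2) * (s^2 + 4) + (e * e - 1) * (4 * Y^2 + s^2 * Y^2)"
    by (simp add: power2_eq_square algebra_simps)
  then have id2: "(Q * m)^2 + (2 * X - e * s * Y)^2 = Q^2"
    using e XY Qs m by (simp add: power2_eq_square)
  then have id3: "Q^2 * m^2 + (2 * X - e * s * Y)^2 = Q^2" by (simp add: power_mult_distrib)
  have "(2 * X - e * s * Y)^2 \<ge> 0" by simp
  then have "Q^2 * m^2 \<le> Q^2 * 1" using id3 by linarith
  then have "m^2 \<le> 1" using Qpos by (simp add: mult_le_cancel_left)
  then have "m^2 = 0 \<or> m^2 = 1"
    by (smt (verit) power2_less_eq_zero_iff zero_le_power2 power_one_right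
        abs_le_square_iff abs_square_le_1 one_le_power power2_eq_1_iff zero_less_power2)
  then show ?thesis
  proof
    assume "m^2 = 0"
    then have "X * s = - (2 * e * Y)" using m by simp
    then have "(X * s)^2 = 4 * (e * e) * Y^2" by (simp add: power2_eq_square algebra_simps)
    then have "X^2 * s^2 = 4 * Y^2" using e by (simp add: power_mult_distrib)
    then have "X^2 * Q = 4 * Q" using XY Qs by (simp add: algebra_simps)
    then have X2: "X^2 = 4" using Qpos by simp
    then have "Y^2 = s^2" using XY Qs by simp
    moreover have "even (Y^2)" using Ye by simp
    moreover have "odd (s^2)" using so by simp
    ultimately show ?thesis by simp
  next
    assume "m^2 = 1"
    then have "(2 * X - e * s * Y)^2 = 0" using id2 by (simp add: power_mult_distrib)
    then have "2 * X = e * s * Y" by simp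
    then have "(2 * X)^2 = (e * s * Y)^2" by simp
    then have "4 * X^2 = e^2 * s^2 * Y^2" by (simp add: power_mult_distrib)
    moreover have "e^2 = 1" using e by (simp add: power2_eq_square)
    ultimately have "4 * X^2 = s^2 * Y^2" by simp
    then have "4 * Q = Y^2 * Q" using XY Qs by (simp add: algebra_simps)
    then show ?thesis using Qpos by simp
  qed
qed

lemma int_rep_unique:
  fixes X Y s :: int and p k :: nat
  assumes pr: "prime p" and po: "odd p" and Q: "int (p ^ k) = s^2 + 4"
    and XY: "X^2 + Y^2 = s^2 + 4" and Ye: "even Y" and so: "odd s"
    and nd: "\<not> (int p dvd X \<and> int p dvd Y)"
  shows "Y^2 = 4"
proof -
  have pri: "prime (int p)" using pr by simp
  have "\<not> int p dvd 2"
  proof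
    assume "int p dvd 2"
    then have "p dvd 2" by presburger
    then have "p \<le> 2" by (rule dvd_imp_le) simp
    moreover have "p \<ge> 2" using pr prime_ge_2_nat by blast
    ultimately show False using po by simp
  qed
  have ns: "\<not> int p dvd s"
  proof
    assume "int p dvd s"
    then have "int p dvd s^2" by (simp add: power2_eq_square)
    moreover have "k \<noteq> 0"
    proof
      assume "k = 0"
      with Q have "s^2 + 4 = 1" by simp
      moreover have "s^2 \<ge> 0" by simp
      ultimately show False by linarith
    qed
    then have "int p dvd int (p ^ k)" by (simp add: dvd_power)
    ultimately have "int p dvd 2^2" using Q by (metis dvd_add_right_iff numeral_Bit0 power2_eq_square
          mult_2 numeral_times_numeral semiring_norm(12) num_double)
    then have "int p dvd 2" using pri prime_dvd_power by blast
    with \<open>\<not> int p dvd 2\<close> show False ..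
  qed
  have prod: "(X * s + 2 * Y) * (X * s - 2 * Y) = (s^2 + 4) * (X^2 - 4)"
    using XY by (simp add: power2_eq_square algebra_simps)
  have "\<not> (int p dvd X * s + 2 * Y \<and> int p dvd X * s - 2 * Y)"
  proof
    assume a: "int p dvd X * s + 2 * Y \<and> int p dvd X * s - 2 * Y"
    then have "int p dvd (X * s + 2 * Y) + (X * s - 2 * Y)"
      using dvd_add[of "int p" "X * s + 2 * Y" "X * s - 2 * Y"] by blast
    moreover have "(X * s + 2 * Y) + (X * s - 2 * Y) = 2 * (X * s)" by simp
    ultimately have "int p dvd 2 * (X * s)" by simp
    then have "int p dvd X" using pri ns \<open>\<not> int p dvd 2\<close> by (simp add: prime_dvd_mult_iff)
    then have "int p dvd X * s" by simp
    then have "int p dvd 2 * Y" using a dvd_add_right_iff[of "int p" "X * s" "2 * Y"] by blast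
    then have "int p dvd Y" using pri \<open>\<not> int p dvd 2\<close> by (simp add: prime_dvd_mult_iff)
    with \<open>int p dvd X\<close> nd show False by blast
  qed
  then have c: "\<not> int p dvd X * s + 2 * Y \<or> \<not> int p dvd X * s - 2 * Y" by blast
  have QQ: "int p ^ k dvd (X * s + 2 * Y) * (X * s - 2 * Y)"
    using prod Q by simp
  have Q': "int p ^ k = s^2 + 4" using Q by simp
  from c show ?thesis
  proof
    assume n2: "\<not> int p dvd X * s + 2 * Y"
    have "coprime (int p) (X * s + 2 * Y)" by (rule prime_imp_coprime[OF pri n2])
    then have "coprime (int p ^ k) (X * s + 2 * Y)" by simp
    then have "int p ^ k dvd X * s - 2 * Y" using QQ coprime_dvd_mult_right_iff by blast
    then have "int p ^ k dvd X * s + 2 * (-1) * Y" by simp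
    then show ?thesis using int_rep_aux[of "-1" "int p ^ k" X s Y] XY Q' Ye so by simp
  next
    assume n1: "\<not> int p dvd X * s - 2 * Y"
    have "coprime (int p) (X * s - 2 * Y)" by (rule prime_imp_coprime[OF pri n1])
    then have "coprime (int p ^ k) (X * s - 2 * Y)" by simp
    then have "int p ^ k dvd X * s + 2 * Y" using QQ coprime_dvd_mult_left_iff by blast
    then have "int p ^ k dvd X * s + 2 * 1 * Y" by simp
    then show ?thesis using int_rep_aux[of 1 "int p ^ k" X s Y] XY Q' Ye so by simp
  qed
qed


definition C4 :: "complex set" where "C4 = {1, \<i>, -1, -\<i>}"

lemma pick_c:
  fixes x y t :: real and wv :: "complex \<Rightarrow> real"
  assumes wv: "wv (-1) = x" "wv 1 = -x" "wv (-\<i>) = y" "wv \<i> = -y"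
    and d: "x \<noteq> 0" "y \<noteq> 0" "x \<noteq> y" "x \<noteq> -y"
    and t: "t \<in> {x, -x, y, -y}"
  shows "\<exists>c0\<in>C4. wv c0 = t \<and> (\<forall>c\<in>C4. c \<noteq> c0 \<longrightarrow> wv c \<noteq> t)"
proof -
  have ne: "(1::complex) \<noteq> -1" "\<i> \<noteq> -\<i>" "(1::complex) \<noteq> \<i>" "(1::complex) \<noteq> -\<i>" "-1 \<noteq> \<i>" "-1 \<noteq> -\<i>"
    by (simp_all add: complex_eq_iff)
  from t show ?thesis
  proof (elim insertE emptyE)
    assume "t = x" then show ?thesis using wv d ne
      by (intro bexI[of _ "-1"]) (auto simp: C4_def)
  next
    assume "t = -x" then show ?thesis using wv d ne
      by (intro bexI[of _ "1"]) (auto simp: C4_def)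
  next
    assume "t = y" then show ?thesis using wv d ne
      by (intro bexI[of _ "-\<i>"]) (auto simp: C4_def)
  next
    assume "t = -y" then show ?thesis using wv d ne
      by (intro bexI[of _ "\<i>"]) (auto simp: C4_def)
  qed
qed

context cycpsi
begin

definition wv :: "complex \<Rightarrow> real" where "wv c = Im ((1 - \<i>) * cnj c * G)"

lemma lam_wv:
  assumes "b \<noteq> 0" shows "lam b = Complex (-1/2) (wv (chi (-b)) / 2)"
proof -
  define W where "W = (1 - \<i>) * cnj (chi (-b)) * G"
  have key: "(1 + \<i>) * chi (-b) * cnj G = cnj W" by (simp add: W_def)
  have "lam b = -1/2 + ((1 - \<i>) * cnj (chi (-b)) * G - (1 + \<i>) * chi (-b) * cnj G) / 4"
    by (rule lam_nz[OF assms])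
  also have "\<dots> = -1/2 + (W - cnj W) / 4" by (simp only: key W_def[symmetric])
  finally have "lam b = -1/2 + (W - cnj W) / 4" .
  then show ?thesis unfolding wv_def W_def[symmetric] by (simp add: complex_eq_iff)
qed

lemma chi_C4: "x \<noteq> 0 \<Longrightarrow> chi x \<in> C4"
  using chi_vals unfolding C4_def by blast

lemma card_chi_neg: "c \<in> C4 \<Longrightarrow> card {b. chi (-b) = c} = f"
proof -
  assume c: "c \<in> C4"
  have "{b. chi (-b) = c} = uminus ` {x. chi x = c}" by (auto intro: image_eqI[of _ _ "- _"])
  then have "card {b. chi (-b) = c} = card {x. chi x = c}"
    by (simp add: card_image inj_on_def)
  then show ?thesis using card_chi_class c unfolding C4_def by simp
qed

lemma Re_lam0: "Re (lam 0) = real (2 * f)"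
  by (simp add: lam_0)

lemma count_target:
  assumes c0: "c0 \<in> C4" "wv c0 = t" "\<forall>c\<in>C4. c \<noteq> c0 \<longrightarrow> wv c \<noteq> t"
  shows "{b. lam b = Complex (-1/2) (t/2)} = {b. chi (-b) = c0}"
proof (rule Set.set_eqI)
  fix b
  have "0 \<notin> C4" by (simp add: C4_def complex_eq_iff)
  show "b \<in> {b. lam b = Complex (-1/2) (t/2)} \<longleftrightarrow> b \<in> {b. chi (-b) = c0}"
  proof
    assume "b \<in> {b. lam b = Complex (-1/2) (t/2)}"
    then have lb: "lam b = Complex (-1/2) (t/2)" by simp
    have "b \<noteq> 0"
    proof
      assume "b = 0"
      then have "Re (lam b) = real (2 * f)" by (simp add: Re_lam0)
      then show False using lb by simp
    qed
    then have "wv (chi (-b)) = t" using lb lam_wv by simp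
    moreover have "chi (-b) \<in> C4" using \<open>b \<noteq> 0\<close> chi_C4 by simp
    ultimately show "b \<in> {b. chi (-b) = c0}" using c0(3) by blast
  next
    assume "b \<in> {b. chi (-b) = c0}"
    then have cb: "chi (-b) = c0" by simp
    then have "b \<noteq> 0" using c0(1) \<open>0 \<notin> C4\<close> by auto
    then show "b \<in> {b. lam b = Complex (-1/2) (t/2)}" using lam_wv cb c0(2) by simp
  qed
qed

lemma final:
  fixes s :: int
  assumes so: "odd s" and qs: "int CARD('a) = s^2 + 4"
  defines "q \<equiv> CARD('a)"
  defines "l0 \<equiv> complex_of_real ((real q - 1) / 2)"
    and "l1 \<equiv> (-1 + \<i> * complex_of_real (sqrt (real q - 2 * sqrt (real q)))) / 2"
    and "l2 \<equiv> (-1 - \<i> * complex_of_real (sqrt (real q - 2 * sqrt (real q)))) / 2"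
    and "l3 \<equiv> (-1 + \<i> * complex_of_real (sqrt (real q + 2 * sqrt (real q)))) / 2"
    and "l4 \<equiv> (-1 - \<i> * complex_of_real (sqrt (real q + 2 * sqrt (real q)))) / 2"
  shows "range lam = {l0, l1, l2, l3, l4} \<and> card {b. lam b = l0} = 1
    \<and> card {b. lam b = l1} = f \<and> card {b. lam b = l2} = f
    \<and> card {b. lam b = l3} = f \<and> card {b. lam b = l4} = f"
proof -
  define a where "a = Re G"
  define bb where "bb = Im G"
  define r where "r = Re Gr"
  have F1: "a^2 + bb^2 = real q"
  proof -
    have "Re (cnj G * G) = a^2 + bb^2" by (simp add: a_def bb_def power2_eq_square)
    then show ?thesis using G_norm by (simp add: q_def)
  qed
  have Grr: "Gr = complex_of_real r"
    using Gr_real by (simp add: r_def complex_eq_iff)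
  have F2: "r^2 = real q"
  proof -
    have "Re (Gr * Gr) = r^2" by (simp add: Grr power2_eq_square)
    then show ?thesis using Gr_sq by (simp add: q_def)
  qed
  have Jd: "J = of_int JX + \<i> * of_int JY" unfolding J_def by (rule J_decomp)
  have qpos: "real q > 0" by (simp add: q_def)
  have F3: "JX^2 + JY^2 = int q"
  proof -
    have "cnj (G * G) * (G * G) = (cnj G * G) * (cnj G * G)" by simp
    also have "\<dots> = of_nat q * of_nat q" using G_norm by (simp add: q_def)
    finally have e1: "cnj (G * G) * (G * G) = of_nat q * of_nat q" .
    have "cnj (G * G) * (G * G) = (cnj J * J) * (cnj Gr * Gr)" using G_sq by simp
    also have "\<dots> = (cnj J * J) * of_nat q" using Gr_norm by (simp add: q_def)
    finally have "(cnj J * J) * of_nat q = of_nat q * of_nat q" using e1 by simp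
    then have "cnj J * J = of_nat q" using qpos by (simp add: mult.commute)
    moreover have "cnj J * J = of_int (JX^2 + JY^2)" by (simp add: Jd complex_eq_iff power2_eq_square)
    ultimately have "(of_int (JX^2 + JY^2) :: complex) = of_int (int q)" by simp
    then show ?thesis by (simp only: of_int_eq_iff)
  qed
  have F4: "JY^2 = 4"
  proof -
    obtain k where k: "CARD('a) = CHAR('a) ^ k" using ff_card_prime_power by blast
    show ?thesis
    proof (rule int_rep_unique[OF ff_prime_char CHAR_odd _ _ JY_even so JXY_not_both_dvd])
      show "int (CHAR('a) ^ k) = s^2 + 4" using qs k by simp
      show "JX^2 + JY^2 = s^2 + 4" using F3 qs by (simp add: q_def)
    qed
  qed
  have F5: "2 * a * bb = real_of_int JY * r"
  proof -
    have "Im (G * G) = 2 * a * bb" by (simp add: a_def bb_def)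
    moreover have "Im (J * Gr) = real_of_int JY * r" by (simp add: Jd Grr)
    ultimately show ?thesis using G_sq by simp
  qed
  have ab2: "(a * bb)^2 = real q"
  proof -
    have "(2 * a * bb)^2 = (real_of_int JY)^2 * r^2" using F5 by (simp add: power_mult_distrib)
    also have "(real_of_int JY)^2 = 4" using F4 by (metis of_int_numeral of_int_power)
    finally show ?thesis using F2 by (simp add: power_mult_distrib)
  qed
  define sq where "sq = sqrt (real q)"
  have sq2: "sq^2 = real q" using qpos by (simp add: sq_def)
  have sqpos: "sq > 0" using qpos by (simp add: sq_def)
  have absab: "\<bar>a * bb\<bar> = sq"
    using ab2 by (metis sq_def real_sqrt_abs)
  have q5: "real q \<ge> 5" using q_ge5 by (simp add: q_def)
  have sq2lt: "sq > 2"
  proof (rule ccontr)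
    assume "\<not> sq > 2"
    then have "sq^2 \<le> 2^2" using sqpos by (intro power_mono) auto
    then show False using sq2 q5 by simp
  qed
  have gap: "real q - 2 * sq > 0"
  proof -
    have "sq * sq > 2 * sq" using sq2lt sqpos by simp
    then show ?thesis using sq2 by (simp add: power2_eq_square)
  qed
  define s1 where "s1 = sqrt (real q - 2 * sq)"
  define s2 where "s2 = sqrt (real q + 2 * sq)"
  define x where "x = a - bb"
  define y where "y = a + bb"
  have x2: "x^2 = real q - 2 * (a * bb)" using F1 by (simp add: x_def power2_eq_square algebra_simps)
  have y2: "y^2 = real q + 2 * (a * bb)" using F1 by (simp add: y_def power2_eq_square algebra_simps)
  have s12: "s1 > 0" "s2 > 0" "s1 \<noteq> s2"
    using gap sqpos by (auto simp: s1_def s2_def)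
  have xy_abs: "(\<bar>x\<bar> = s1 \<and> \<bar>y\<bar> = s2) \<or> (\<bar>x\<bar> = s2 \<and> \<bar>y\<bar> = s1)"
  proof (cases "a * bb \<ge> 0")
    case True
    then have "a * bb = sq" using absab by simp
    then show ?thesis using x2 y2 by (simp add: s1_def s2_def flip: real_sqrt_abs)
  next
    case False
    then have "a * bb = - sq" using absab by simp
    then show ?thesis using x2 y2 by (simp add: s1_def s2_def flip: real_sqrt_abs)
  qed
  have xne: "x \<noteq> 0" "y \<noteq> 0" "x \<noteq> y" "x \<noteq> -y"
  proof -
    show "x \<noteq> 0" "y \<noteq> 0" using xy_abs s12 by auto
    have "a \<noteq> 0" "bb \<noteq> 0" using absab sqpos by auto
    then show "x \<noteq> y" "x \<noteq> -y" by (auto simp: x_def y_def)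
  qed
  have wvs: "wv (-1) = x" "wv 1 = -x" "wv (-\<i>) = y" "wv \<i> = -y"
    by (simp_all add: wv_def x_def y_def a_def bb_def algebra_simps)
  have tgt: "t \<in> {s1, -s1, s2, -s2} \<Longrightarrow> t \<in> {x, -x, y, -y}" for t
    using xy_abs by (cases "x \<ge> 0"; cases "y \<ge> 0") auto
  have cnt: "card {b. lam b = Complex (-1/2) (t/2)} = f" if tt: "t \<in> {s1, -s1, s2, -s2}" for t
  proof -
    obtain c0 where c0: "c0 \<in> C4" "wv c0 = t" "\<forall>c\<in>C4. c \<noteq> c0 \<longrightarrow> wv c \<noteq> t"
      using pick_c[OF wvs xne tgt[OF tt]] by blast
    show ?thesis using count_target[OF c0] card_chi_neg[OF c0(1)] by simp
  qed
  have l1: "l1 = Complex (-1/2) (s1/2)" unfolding l1_def s1_def sq_def by (simp add: complex_eq_iff)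
  have l2: "l2 = Complex (-1/2) (-s1/2)" unfolding l2_def s1_def sq_def by (simp add: complex_eq_iff)
  have l3: "l3 = Complex (-1/2) (s2/2)" unfolding l3_def s2_def sq_def by (simp add: complex_eq_iff)
  have l4: "l4 = Complex (-1/2) (-s2/2)" unfolding l4_def s2_def sq_def by (simp add: complex_eq_iff)
  have l0: "l0 = lam 0"
  proof -
    have "real q = 4 * real f + 1" using q_eq by (simp add: q_def)
    then show ?thesis by (simp add: l0_def lam_0 complex_eq_iff)
  qed
  have c1: "card {b. lam b = l1} = f" "card {b. lam b = l2} = f"
    "card {b. lam b = l3} = f" "card {b. lam b = l4} = f"
    using cnt[of s1] cnt[of "-s1"] cnt[of s2] cnt[of "-s2"] by (simp_all add: l1 l2 l3 l4)
  have c0: "{b. lam b = l0} = {0}"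
  proof (intro Set.set_eqI iffI)
    fix b assume "b \<in> {b. lam b = l0}"
    then have "lam b = lam 0" using l0 by simp
    show "b \<in> {0}"
    proof (rule ccontr)
      assume "b \<notin> {0}"
      then have "Re (lam b) = -1/2" using lam_wv by simp
      then show False using \<open>lam b = lam 0\<close> Re_lam0 by simp
    qed
  qed (simp add: l0)
  have rng: "range lam = {l0, l1, l2, l3, l4}"
  proof
    show "range lam \<subseteq> {l0, l1, l2, l3, l4}"
    proof
      fix z assume "z \<in> range lam"
      then obtain b where b: "z = lam b" by blast
      show "z \<in> {l0, l1, l2, l3, l4}"
      proof (cases "b = 0")
        case True then show ?thesis using b l0 by simp
      next
        case False
        have "chi (-b) \<in> C4" using False chi_C4 by simp
        then have "wv (chi (-b)) \<in> {x, -x, y, -y}" using wvs by (auto simp: C4_def)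
        then have "wv (chi (-b)) \<in> {s1, -s1, s2, -s2}"
          using xy_abs by (cases "x \<ge> 0"; cases "y \<ge> 0") auto
        then show ?thesis using b lam_wv[OF False] l1 l2 l3 l4 by auto
      qed
    qed
  next
    have "f > 0" by (rule f_pos)
    then have ex: "{b. lam b = l} \<noteq> {}" if "card {b. lam b = l} = f" for l
      using that by (metis card.empty less_irrefl)
    show "{l0, l1, l2, l3, l4} \<subseteq> range lam"
      using ex[OF c1(1)] ex[OF c1(2)] ex[OF c1(3)] ex[OF c1(4)] l0 by auto
  qed
  show ?thesis using rng c0 c1 by simp
qed

end


theorem theorem2:
  fixes g :: "'a::{field,finite}" and q :: nat and s :: int
  assumes "CARD('a) = q"
    and "q mod 8 = 5"
    and "odd s" and "int q = s^2 + 4"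
    and "\<forall>x::'a. x \<noteq> 0 \<longrightarrow> (\<exists>k::nat. x = g ^ k)"
  defines "l0 \<equiv> complex_of_real ((real q - 1) / 2)"
    and "l1 \<equiv> (-1 + \<i> * complex_of_real (sqrt (real q - 2 * sqrt (real q)))) / 2"
    and "l2 \<equiv> (-1 - \<i> * complex_of_real (sqrt (real q - 2 * sqrt (real q)))) / 2"
    and "l3 \<equiv> (-1 + \<i> * complex_of_real (sqrt (real q + 2 * sqrt (real q)))) / 2"
    and "l4 \<equiv> (-1 - \<i> * complex_of_real (sqrt (real q + 2 * sqrt (real q)))) / 2"
  shows "{z. poly (charpoly (ct_adj g)) z = 0} = {l0, l1, l2, l3, l4}
    \<and> order l0 (charpoly (ct_adj g)) = 1
    \<and> order l1 (charpoly (ct_adj g)) = (q - 1) div 4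
    \<and> order l2 (charpoly (ct_adj g)) = (q - 1) div 4
    \<and> order l3 (charpoly (ct_adj g)) = (q - 1) div 4
    \<and> order l4 (charpoly (ct_adj g)) = (q - 1) div 4"
proof -
  interpret cyc g
  proof
    show "\<forall>x::'a. x \<noteq> 0 \<longrightarrow> (\<exists>k::nat. x = g ^ k)" by (rule assms(5))
    show "CARD('a) mod 8 = 5" using assms(1,2) by simp
  qed
  obtain psi :: "'a \<Rightarrow> complex" where psi: "\<forall>x y. psi (x + y) = psi x * psi y"
    "\<forall>x. cnj (psi x) * psi x = 1" "\<exists>c. psi c \<noteq> 1"
    using exists_psi by blast
  interpret P: cycpsi g psi
    by unfold_locales (use psi in auto)
  have cp: "charpoly (ct_adj g) = (\<Prod>b\<in>UNIV. [:- P.lam b, 1:])" by (rule P.charpoly_prod)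
  have qs: "int CARD('a) = s^2 + 4" using assms(1,4) by simp
  have fq: "(q - 1) div 4 = f" using assms(1) by (simp add: f_def)
  have fin: "range P.lam = {l0, l1, l2, l3, l4} \<and> card {b. P.lam b = l0} = 1
    \<and> card {b. P.lam b = l1} = f \<and> card {b. P.lam b = l2} = f
    \<and> card {b. P.lam b = l3} = f \<and> card {b. P.lam b = l4} = f"
    using P.final[OF assms(3) qs, unfolded assms(1)] unfolding assms(6-10) .
  show ?thesis
    unfolding cp roots_prod_linear order_prod_linear[OF finite[of UNIV]] fq
    using fin by simp
qed

end
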